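(* Let $G$ be a graph whose maximum degree is $3$ and with $|V(G)|>4$. Then $\mu(G)\leq 2$.
   Context: Multi-graphs have no self-loops; the skeleton of a multi-graph is its underlying simple graph. Each edge $e$ between $u$ and $v$ consists of two half-edges $e_u$ and $e_v$. A half-edge colouring is a function $c$ from the set of half-edges to $\mathbb{N}_0$; each edge $e$ also gets a weight $w(e)\in\mathbb{C}$. The weight of a perfect matching $P$ is $\prod_{e\in P}w(e)$. A vertex colouring is a map $vc:V\to\mathbb{N}_0$; it filters out the subgraph consisting of all edges $e$ (between $u,v$) with $c(e_u)=vc(u)$ and $c(e_v)=vc(v)$ (with the same weights). The weight of $vc$ is the sum of the weights of all perfect matchings of this filtered subgraph; $vc$ is feasible if the filtered subgraph has at least one perfect matching (an infeasible colouring has weight $0$). An edge-coloured edge-weighted multi-graph is GHZ if every feasible monochromatic vertex colouring has weight $1$ and every non-monochromatic vertex colouring has weight $0$; its dimension is the number of feasible monochromatic vertex colourings. For a simple graph $G$, the matching index $\mu(G)$ is the maximum (possibly $\infty$) of the dimension over all GHZ edge-coloured edge-weighted multi-graphs whose skeleton is $G$. *)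

theory Defs
  imports Complex_Main "HOL-Library.Extended_Nat"
begin

definition simple_graph :: "'v set \<Rightarrow> 'v set set \<Rightarrow> bool" where
  "simple_graph V E \<longleftrightarrow> finite V \<and> (\<forall>e\<in>E. e \<subseteq> V \<and> card e = 2)"

definition degree :: "'v set set \<Rightarrow> 'v \<Rightarrow> nat" where
  "degree E v = card {e\<in>E. v \<in> e}"

definition max_degree :: "'v set \<Rightarrow> 'v set set \<Rightarrow> nat" where
  "max_degree V E = Max (degree E ` V)"

text \<open>The half-edge of e at endpoint u has colour c e u; the edge has weight w e.\<close>

definition endset :: "(nat \<Rightarrow> 'v \<times> 'v) \<Rightarrow> nat \<Rightarrow> 'v set" where
  "endset ends e = {fst (ends e), snd (ends e)}"

definition multigraph :: "'v set \<Rightarrow> nat set \<Rightarrow> (nat \<Rightarrow> 'v \<times> 'v) \<Rightarrow> bool" where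
  "multigraph V ME ends \<longleftrightarrow> finite ME \<and>
     (\<forall>e\<in>ME. fst (ends e) \<in> V \<and> snd (ends e) \<in> V \<and> fst (ends e) \<noteq> snd (ends e))"

definition skeleton :: "nat set \<Rightarrow> (nat \<Rightarrow> 'v \<times> 'v) \<Rightarrow> 'v set set" where
  "skeleton ME ends = endset ends ` ME"

definition perfect_matching :: "'v set \<Rightarrow> (nat \<Rightarrow> 'v \<times> 'v) \<Rightarrow> nat set \<Rightarrow> nat set \<Rightarrow> bool" where
  "perfect_matching V ends F P \<longleftrightarrow> P \<subseteq> F \<and> (\<forall>v\<in>V. \<exists>!e. e \<in> P \<and> v \<in> endset ends e)"

definition filtered :: "nat set \<Rightarrow> (nat \<Rightarrow> 'v \<times> 'v) \<Rightarrow> (nat \<Rightarrow> 'v \<Rightarrow> nat) \<Rightarrow> ('v \<Rightarrow> nat) \<Rightarrow> nat set" where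
  "filtered ME ends c vc = {e\<in>ME. c e (fst (ends e)) = vc (fst (ends e)) \<and> c e (snd (ends e)) = vc (snd (ends e))}"

definition vc_weight :: "'v set \<Rightarrow> nat set \<Rightarrow> (nat \<Rightarrow> 'v \<times> 'v) \<Rightarrow> (nat \<Rightarrow> 'v \<Rightarrow> nat)
    \<Rightarrow> (nat \<Rightarrow> complex) \<Rightarrow> ('v \<Rightarrow> nat) \<Rightarrow> complex" where
  "vc_weight V ME ends c w vc =
     (\<Sum>P\<in>{P. perfect_matching V ends (filtered ME ends c vc) P}. \<Prod>e\<in>P. w e)"

definition feasible :: "'v set \<Rightarrow> nat set \<Rightarrow> (nat \<Rightarrow> 'v \<times> 'v) \<Rightarrow> (nat \<Rightarrow> 'v \<Rightarrow> nat) \<Rightarrow> ('v \<Rightarrow> nat) \<Rightarrow> bool" where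
  "feasible V ME ends c vc \<longleftrightarrow> (\<exists>P. perfect_matching V ends (filtered ME ends c vc) P)"

definition monochromatic :: "'v set \<Rightarrow> ('v \<Rightarrow> nat) \<Rightarrow> bool" where
  "monochromatic V vc \<longleftrightarrow> (\<forall>u\<in>V. \<forall>v\<in>V. vc u = vc v)"

definition GHZ :: "'v set \<Rightarrow> nat set \<Rightarrow> (nat \<Rightarrow> 'v \<times> 'v) \<Rightarrow> (nat \<Rightarrow> 'v \<Rightarrow> nat) \<Rightarrow> (nat \<Rightarrow> complex) \<Rightarrow> bool" where
  "GHZ V ME ends c w \<longleftrightarrow>
     (\<forall>vc. monochromatic V vc \<and> feasible V ME ends c vc \<longrightarrow> vc_weight V ME ends c w vc = 1) \<and>
     (\<forall>vc. \<not> monochromatic V vc \<longrightarrow> vc_weight V ME ends c w vc = 0)"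

text \<open>Monochromatic vertex colourings are identified by their colour k (as functions on V).\<close>
definition dimension :: "'v set \<Rightarrow> nat set \<Rightarrow> (nat \<Rightarrow> 'v \<times> 'v) \<Rightarrow> (nat \<Rightarrow> 'v \<Rightarrow> nat) \<Rightarrow> enat" where
  "dimension V ME ends c = (if finite {k. feasible V ME ends c (\<lambda>_. k)}
      then enat (card {k. feasible V ME ends c (\<lambda>_. k)}) else \<infinity>)"

definition matching_index :: "'v set \<Rightarrow> 'v set set \<Rightarrow> enat" where
  "matching_index V E = (SUP (ME, ends, c, w) \<in>
      {(ME, ends, c, w). multigraph V ME ends \<and> skeleton ME ends = E \<and> GHZ V ME ends c w}.
      dimension V ME ends c)"

end

theory Submission
  imports Defs "HOL-Computational_Algebra.Polynomial"
begin

definition RE :: "'v set \<Rightarrow> nat set \<Rightarrow> (nat \<Rightarrow> 'v \<times> 'v) \<Rightarrow> nat set" where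
  "RE U ME ends = {e\<in>ME. fst (ends e) \<in> U \<and> snd (ends e) \<in> U}"

definition PMs :: "'v set \<Rightarrow> nat set \<Rightarrow> (nat \<Rightarrow> 'v \<times> 'v) \<Rightarrow> (nat \<Rightarrow> 'v \<Rightarrow> nat) \<Rightarrow> ('v \<Rightarrow> nat) \<Rightarrow> nat set set" where
  "PMs U ME ends c vc = {P. perfect_matching U ends (filtered (RE U ME ends) ends c vc) P}"

definition WU :: "'v set \<Rightarrow> nat set \<Rightarrow> (nat \<Rightarrow> 'v \<times> 'v) \<Rightarrow> (nat \<Rightarrow> 'v \<Rightarrow> nat) \<Rightarrow> (nat \<Rightarrow> complex) \<Rightarrow> ('v \<Rightarrow> nat) \<Rightarrow> complex" where
  "WU U ME ends c w vc = (\<Sum>P\<in>PMs U ME ends c vc. \<Prod>e\<in>P. w e)"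

definition Mx :: "nat set \<Rightarrow> (nat \<Rightarrow> 'v \<times> 'v) \<Rightarrow> (nat \<Rightarrow> 'v \<Rightarrow> nat) \<Rightarrow> (nat \<Rightarrow> complex) \<Rightarrow> 'v \<Rightarrow> 'v \<Rightarrow> nat \<Rightarrow> nat \<Rightarrow> complex" where
  "Mx ME ends c w u x k i = (\<Sum>e\<in>{e\<in>ME. endset ends e = {u,x} \<and> c e u = k \<and> c e x = i}. w e)"

lemma PMs_iff: "P \<in> PMs U ME ends c vc \<longleftrightarrow> P \<subseteq> ME \<and>
   (\<forall>e\<in>P. fst (ends e) \<in> U \<and> snd (ends e) \<in> U \<and> c e (fst (ends e)) = vc (fst (ends e)) \<and> c e (snd (ends e)) = vc (snd (ends e))) \<and>
   (\<forall>v\<in>U. \<exists>!e. e\<in>P \<and> v \<in> endset ends e)"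
  by (auto simp: PMs_def perfect_matching_def filtered_def RE_def)

lemma PMs_finite: "finite ME \<Longrightarrow> finite (PMs U ME ends c vc)"
  by (rule finite_subset[of _ "Pow ME"]) (auto simp: PMs_iff)

lemma WU_local:
  assumes "\<And>x. x \<in> U \<Longrightarrow> vc x = vc' x"
  shows "WU U ME ends c w vc = WU U ME ends c w vc'"
proof -
  have "PMs U ME ends c vc = PMs U ME ends c vc'"
    using assms by (auto simp: PMs_iff)
  thus ?thesis by (simp add: WU_def)
qed

lemma WU_empty: "WU {} ME ends c w vc = 1"
proof -
  have "PMs {} ME ends c vc = {{}}" by (auto simp: PMs_iff)
  thus ?thesis by (simp add: WU_def)
qed

lemma expand1:
  assumes fin: "finite ME" and u: "u \<in> U"
  shows "WU U ME ends c w vc = (\<Sum>e\<in>{e\<in>filtered (RE U ME ends) ends c vc. u \<in> endset ends e}.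
            w e * WU (U - endset ends e) ME ends c w vc)"
proof -
  define Eu where "Eu = {e\<in>filtered (RE U ME ends) ends c vc. u \<in> endset ends e}"
  define S where "S = Sigma Eu (\<lambda>e. PMs (U - endset ends e) ME ends c vc)"
  have finEu: "finite Eu" unfolding Eu_def filtered_def RE_def using fin by auto
  have EuD: "e \<in> ME \<and> fst (ends e) \<in> U \<and> snd (ends e) \<in> U \<and> c e (fst (ends e)) = vc (fst (ends e)) \<and> c e (snd (ends e)) = vc (snd (ends e)) \<and> u \<in> endset ends e"
    if "e \<in> Eu" for e using that by (auto simp: Eu_def filtered_def RE_def)
  have Sdisj: "e \<notin> P" "\<forall>e'\<in>P. u \<notin> endset ends e'" if "(e,P) \<in> S" for e P
  proof -
    have P: "P \<in> PMs (U - endset ends e) ME ends c vc" and e: "e \<in> Eu" using that by (auto simp: S_def)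
    show "e \<notin> P" using P by (auto simp: PMs_iff endset_def)
    show "\<forall>e'\<in>P. u \<notin> endset ends e'" using P EuD[OF e] by (auto simp: PMs_iff endset_def)
  qed
  have "(\<Sum>e\<in>Eu. w e * WU (U - endset ends e) ME ends c w vc)
      = (\<Sum>e\<in>Eu. \<Sum>P\<in>PMs (U - endset ends e) ME ends c vc. w e * (\<Prod>e\<in>P. w e))"
    by (simp add: WU_def sum_distrib_left)
  also have "\<dots> = (\<Sum>(e,P)\<in>S. w e * (\<Prod>e\<in>P. w e))"
    unfolding S_def by (rule sum.Sigma) (use finEu PMs_finite[OF fin] in auto)
  also have "\<dots> = (\<Sum>(e,P)\<in>S. (\<Prod>e\<in>insert e P. w e))"
  proof (rule sum.cong[OF refl])
    fix x assume "x \<in> S"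
    then obtain e P where x: "x = (e,P)" and eP: "(e,P) \<in> S" by (cases x) auto
    have "finite P" using eP fin by (auto simp: S_def PMs_iff intro: finite_subset)
    thus "(case x of (e, P) \<Rightarrow> w e * prod w P) = (case x of (e, P) \<Rightarrow> prod w (insert e P))"
      using Sdisj(1)[OF eP] x by simp
  qed
  also have "\<dots> = (\<Sum>P\<in>PMs U ME ends c vc. \<Prod>e\<in>P. w e)"
  proof -
    have bij: "bij_betw (\<lambda>(e,P). insert e P) S (PMs U ME ends c vc)"
    proof (rule bij_betwI')
      fix x y assume x: "x \<in> S" and y: "y \<in> S"
      obtain e1 P1 where x1: "x = (e1,P1)" by (cases x) auto
      obtain e2 P2 where y2: "y = (e2,P2)" by (cases y) auto
      show "((case x of (e, P) \<Rightarrow> insert e P) = (case y of (e, P) \<Rightarrow> insert e P)) = (x = y)"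
      proof
        assume eq: "(case x of (e, P) \<Rightarrow> insert e P) = (case y of (e, P) \<Rightarrow> insert e P)"
        hence eq': "insert e1 P1 = insert e2 P2" using x1 y2 by simp
        have u1: "u \<in> endset ends e1" using x x1 EuD by (auto simp: S_def)
        have "e1 = e2"
        proof (rule ccontr)
          assume "e1 \<noteq> e2"
          hence "e1 \<in> P2" using eq' by blast
          thus False using Sdisj(2)[of e2 P2] y y2 u1 by auto
        qed
        moreover have "e1 \<notin> P1" "e2 \<notin> P2" using Sdisj(1)[of e1 P1] Sdisj(1)[of e2 P2] x y x1 y2 by auto
        ultimately have "P1 = P2" using eq' insert_ident by metis
        thus "x = y" using x1 y2 \<open>e1 = e2\<close> by simp
      qed simp
    next
      fix x assume x: "x \<in> S"
      obtain e P where x1: "x = (e,P)" by (cases x) auto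
      have e: "e \<in> Eu" and P: "P \<in> PMs (U - endset ends e) ME ends c vc" using x x1 by (auto simp: S_def)
      note ED = EuD[OF e]
      have "insert e P \<in> PMs U ME ends c vc"
        unfolding PMs_iff
      proof (intro conjI)
        show "insert e P \<subseteq> ME" using ED P by (auto simp: PMs_iff)
      next
        show "\<forall>e'\<in>insert e P. fst (ends e') \<in> U \<and> snd (ends e') \<in> U \<and> c e' (fst (ends e')) = vc (fst (ends e')) \<and> c e' (snd (ends e')) = vc (snd (ends e'))"
          using ED P by (auto simp: PMs_iff)
      next
        show "\<forall>v\<in>U. \<exists>!e'. e' \<in> insert e P \<and> v \<in> endset ends e'"
        proof
        fix v assume v: "v \<in> U"
        show "\<exists>!e'. e' \<in> insert e P \<and> v \<in> endset ends e'"
        proof (cases "v \<in> endset ends e")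
          case True
          have "e' = e" if "e' \<in> insert e P" "v \<in> endset ends e'" for e'
            using that P True by (auto simp: PMs_iff endset_def)
          thus ?thesis using True by blast
        next
          case False
          hence "v \<in> U - endset ends e" using v by blast
          hence "\<exists>!e'. e' \<in> P \<and> v \<in> endset ends e'" using P unfolding PMs_iff by blast
          then obtain e' where e': "e' \<in> P" "v \<in> endset ends e'" and un: "\<And>e''. e'' \<in> P \<and> v \<in> endset ends e'' \<Longrightarrow> e'' = e'"
            by blast
          show ?thesis using e' un False by blast
        qed
        qed
      qed
      thus "(case x of (e, P) \<Rightarrow> insert e P) \<in> PMs U ME ends c vc" using x1 by simp
    next
      fix P assume P: "P \<in> PMs U ME ends c vc"
      have "\<exists>!e. e \<in> P \<and> u \<in> endset ends e" using P u unfolding PMs_iff by blast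
      then obtain e where e: "e \<in> P" "u \<in> endset ends e" and un: "\<And>e'. e' \<in> P \<and> u \<in> endset ends e' \<Longrightarrow> e' = e"
        by blast
      have PD: "P \<subseteq> ME" "\<forall>e\<in>P. fst (ends e) \<in> U \<and> snd (ends e) \<in> U \<and> c e (fst (ends e)) = vc (fst (ends e)) \<and> c e (snd (ends e)) = vc (snd (ends e))"
        "\<forall>v\<in>U. \<exists>!e. e\<in>P \<and> v \<in> endset ends e" using P unfolding PMs_iff by auto
      have eEu: "e \<in> Eu" using e PD unfolding Eu_def filtered_def RE_def by auto
      have eU: "endset ends e \<subseteq> U" using e PD by (auto simp: endset_def)
      have notin: "endset ends e' \<inter> endset ends e = {}" if "e' \<in> P" "e' \<noteq> e" for e'
      proof (rule ccontr)
        assume "endset ends e' \<inter> endset ends e \<noteq> {}"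
        then obtain y where y: "y \<in> endset ends e'" "y \<in> endset ends e" by blast
        hence "y \<in> U" using eU by auto
        hence "\<exists>!e. e\<in>P \<and> y \<in> endset ends e" using PD by auto
        thus False using y that e by blast
      qed
      have "P - {e} \<in> PMs (U - endset ends e) ME ends c vc"
        unfolding PMs_iff
      proof (intro conjI)
        show "P - {e} \<subseteq> ME" using PD by auto
      next
        show "\<forall>e'\<in>P - {e}. fst (ends e') \<in> U - endset ends e \<and> snd (ends e') \<in> U - endset ends e \<and> c e' (fst (ends e')) = vc (fst (ends e')) \<and> c e' (snd (ends e')) = vc (snd (ends e'))"
        proof
        fix e' assume e': "e' \<in> P - {e}"
        have "fst (ends e') \<notin> endset ends e" "snd (ends e') \<notin> endset ends e"
          using notin[of e'] e' by (auto simp: endset_def)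
        thus "fst (ends e') \<in> U - endset ends e \<and> snd (ends e') \<in> U - endset ends e \<and> c e' (fst (ends e')) = vc (fst (ends e')) \<and> c e' (snd (ends e')) = vc (snd (ends e'))"
          using PD e' by auto
        qed
      next
        show "\<forall>v\<in>U - endset ends e. \<exists>!e'. e' \<in> P - {e} \<and> v \<in> endset ends e'"
        proof
        fix v assume v: "v \<in> U - endset ends e"
        hence "\<exists>!e'. e' \<in> P \<and> v \<in> endset ends e'" using PD by blast
        then obtain e' where e': "e' \<in> P" "v \<in> endset ends e'" and un': "\<And>e''. e'' \<in> P \<and> v \<in> endset ends e'' \<Longrightarrow> e'' = e'"
          by blast
        have "e' \<noteq> e" using e' v by auto
        thus "\<exists>!e'. e' \<in> P - {e} \<and> v \<in> endset ends e'" using e' un' by blast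
        qed
      qed
      hence "(e, P - {e}) \<in> S" using eEu by (auto simp: S_def)
      moreover have "P = (case (e, P - {e}) of (e, P) \<Rightarrow> insert e P)" using e by auto
      ultimately show "\<exists>x\<in>S. P = (case x of (e, P) \<Rightarrow> insert e P)" by blast
    qed
    show ?thesis using sum.reindex_bij_betw[OF bij, of "\<lambda>P. \<Prod>e\<in>P. w e"]
      by (simp add: case_prod_unfold)
  qed
  finally show ?thesis by (simp add: WU_def Eu_def)
qed

lemma expand2:
  assumes fin: "finite ME" and nl: "\<forall>e\<in>ME. fst (ends e) \<noteq> snd (ends e)"
    and u: "u \<in> U" and finU: "finite U"
  shows "WU U ME ends c w vc = (\<Sum>x\<in>U-{u}. Mx ME ends c w u x (vc u) (vc x) * WU (U - {u,x}) ME ends c w vc)"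
proof -
  define Eu where "Eu = {e\<in>filtered (RE U ME ends) ends c vc. u \<in> endset ends e}"
  define oth where "oth e = (if fst (ends e) = u then snd (ends e) else fst (ends e))" for e
  have finEu: "finite Eu" unfolding Eu_def filtered_def RE_def using fin by auto
  have EuD: "e \<in> ME \<and> fst (ends e) \<in> U \<and> snd (ends e) \<in> U \<and> c e (fst (ends e)) = vc (fst (ends e)) \<and> c e (snd (ends e)) = vc (snd (ends e)) \<and> u \<in> endset ends e"
    if "e \<in> Eu" for e using that by (auto simp: Eu_def filtered_def RE_def)
  have endo: "endset ends e = {u, oth e}" "oth e \<in> U - {u}" if "e \<in> Eu" for e
    using EuD[OF that] nl by (auto simp: endset_def oth_def)
  have "WU U ME ends c w vc = (\<Sum>e\<in>Eu. w e * WU (U - endset ends e) ME ends c w vc)"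
    unfolding Eu_def by (rule expand1[OF fin u])
  also have "\<dots> = (\<Sum>x\<in>U-{u}. \<Sum>e\<in>{e\<in>Eu. oth e = x}. w e * WU (U - endset ends e) ME ends c w vc)"
    by (rule sum.group[symmetric]) (use finEu finU endo in auto)
  also have "\<dots> = (\<Sum>x\<in>U-{u}. Mx ME ends c w u x (vc u) (vc x) * WU (U - {u,x}) ME ends c w vc)"
  proof (rule sum.cong[OF refl])
    fix x assume x: "x \<in> U - {u}"
    have seteq: "{e\<in>Eu. oth e = x} = {e\<in>ME. endset ends e = {u,x} \<and> c e u = vc u \<and> c e x = vc x}"
    proof (intro set_eqI iffI)
      fix e assume e: "e \<in> {e\<in>Eu. oth e = x}"
      hence "e \<in> Eu" "oth e = x" by auto
      note D = EuD[OF this(1)] endo[OF this(1)]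
      thus "e \<in> {e\<in>ME. endset ends e = {u,x} \<and> c e u = vc u \<and> c e x = vc x}"
        using \<open>oth e = x\<close> by (auto simp: oth_def endset_def split: if_splits)
    next
      fix e assume e: "e \<in> {e\<in>ME. endset ends e = {u,x} \<and> c e u = vc u \<and> c e x = vc x}"
      hence e1: "e \<in> ME" "{fst (ends e), snd (ends e)} = {u,x}" "c e u = vc u" "c e x = vc x"
        by (auto simp: endset_def)
      have "(fst (ends e) = u \<and> snd (ends e) = x) \<or> (fst (ends e) = x \<and> snd (ends e) = u)"
        using e1(2) x by (auto simp: doubleton_eq_iff)
      thus "e \<in> {e\<in>Eu. oth e = x}"
        using e1 x u by (auto simp: Eu_def filtered_def RE_def endset_def oth_def)
    qed
    have "(\<Sum>e\<in>{e\<in>Eu. oth e = x}. w e * WU (U - endset ends e) ME ends c w vc)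
        = (\<Sum>e\<in>{e\<in>Eu. oth e = x}. w e * WU (U - {u,x}) ME ends c w vc)"
      by (rule sum.cong[OF refl]) (use endo in auto)
    also have "\<dots> = Mx ME ends c w u x (vc u) (vc x) * WU (U - {u,x}) ME ends c w vc"
      by (simp add: Mx_def seteq sum_distrib_right)
    finally show "(\<Sum>e\<in>{e\<in>Eu. oth e = x}. w e * WU (U - endset ends e) ME ends c w vc)
        = Mx ME ends c w u x (vc u) (vc x) * WU (U - {u,x}) ME ends c w vc" .
  qed
  finally show ?thesis .
qed

lemma Mx_sym: "Mx ME ends c w u x k i = Mx ME ends c w x u i k"
  unfolding Mx_def by (rule sum.cong) (auto simp: insert_commute)

lemma Mx_nz_edge: "Mx ME ends c w u x k i \<noteq> 0 \<Longrightarrow> \<exists>e\<in>ME. endset ends e = {u,x}"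
  unfolding Mx_def by (metis (mono_tags, lifting) mem_Collect_eq sum.neutral)

lemma WU_V:
  assumes "multigraph V ME ends"
  shows "WU V ME ends c w vc = vc_weight V ME ends c w vc"
proof -
  have "RE V ME ends = ME" using assms by (auto simp: RE_def multigraph_def)
  thus ?thesis by (simp add: WU_def vc_weight_def PMs_def)
qed

lemma feasible_iff:
  assumes "multigraph V ME ends"
  shows "feasible V ME ends c vc \<longleftrightarrow> PMs V ME ends c vc \<noteq> {}"
proof -
  have "RE V ME ends = ME" using assms by (auto simp: RE_def multigraph_def)
  thus ?thesis by (simp add: feasible_def PMs_def)
qed

lemma alg3:
  fixes \<beta> \<gamma> \<rho> :: "nat \<Rightarrow> complex" and F G :: "nat \<Rightarrow> nat \<Rightarrow> complex"
  assumes K: "j1 \<noteq> j2" "j1 \<noteq> j3" "j2 \<noteq> j3"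
  and E: "\<And>j l m. j \<in> {j1,j2,j3} \<Longrightarrow> l \<in> {j1,j2,j3} \<Longrightarrow> m \<in> {j1,j2,j3} \<Longrightarrow>
            \<beta> j * F l m + \<gamma> l * G j m = (if j = l \<and> l = m then \<rho> j else 0)"
  and \<rho>: "\<And>j. j \<in> {j1,j2,j3} \<Longrightarrow> \<rho> j \<noteq> 0"
  shows False
proof -
  have bg: "\<beta> l * \<gamma> l = 0" if jl: "l \<in> {j1,j2,j3}" "j \<in> {j1,j2,j3}" "j \<noteq> l" for j l
  proof -
    have e1: "\<beta> j * F j j + \<gamma> j * G j j = \<rho> j" using E[of j j j] jl by simp
    have e2: "\<beta> l * F j j + \<gamma> j * G l j = 0" using E[of l j j] jl by simp
    have e3: "\<beta> j * F l j + \<gamma> l * G j j = 0" using E[of j l j] jl by simp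
    have e4: "\<beta> l * F l j + \<gamma> l * G l j = 0" using E[of l l j] jl by simp
    have f2: "\<beta> l * F j j = - (\<gamma> j * G l j)" using e2 by (simp add: eq_neg_iff_add_eq_0)
    have f3: "\<gamma> l * G j j = - (\<beta> j * F l j)" using e3 by (simp add: eq_neg_iff_add_eq_0 add.commute)
    have "\<beta> l * \<gamma> l * \<rho> j = \<beta> l * \<gamma> l * (\<beta> j * F j j + \<gamma> j * G j j)" by (simp add: e1)
    also have "\<dots> = \<beta> j * \<gamma> l * (\<beta> l * F j j) + \<beta> l * \<gamma> j * (\<gamma> l * G j j)" by (simp add: algebra_simps)
    also have "\<dots> = \<beta> j * \<gamma> l * (- (\<gamma> j * G l j)) + \<beta> l * \<gamma> j * (- (\<beta> j * F l j))" by (simp only: f2 f3)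
    also have "\<dots> = - (\<beta> j * \<gamma> j) * (\<beta> l * F l j + \<gamma> l * G l j)" by (simp add: algebra_simps)
    also have "\<dots> = 0" using e4 by simp
    finally have "\<beta> l * \<gamma> l * \<rho> j = 0" .
    thus ?thesis using \<rho>[of j] jl by simp
  qed
  have bg': "\<beta> l = 0 \<or> \<gamma> l = 0" if "l \<in> {j1,j2,j3}" for l
    using that bg[of l j1] bg[of l j2] K by auto
  have nb: "\<not> (\<beta> j = 0 \<and> \<beta> l = 0)" if jl: "j \<in> {j1,j2,j3}" "l \<in> {j1,j2,j3}" "j \<noteq> l" for j l
  proof
    assume b: "\<beta> j = 0 \<and> \<beta> l = 0"
    have "\<gamma> j * G j j = \<rho> j" using E[of j j j] jl b by simp
    hence "\<gamma> j \<noteq> 0" using \<rho>[of j] jl by auto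
    moreover have "\<gamma> l * G l l = \<rho> l" using E[of l l l] jl b by simp
    hence "G l l \<noteq> 0" using \<rho>[of l] jl by auto
    moreover have "\<gamma> j * G l l = 0" using E[of l j l] jl b by simp
    ultimately show False by simp
  qed
  have ng: "\<not> (\<gamma> j = 0 \<and> \<gamma> l = 0)" if jl: "j \<in> {j1,j2,j3}" "l \<in> {j1,j2,j3}" "j \<noteq> l" for j l
  proof
    assume b: "\<gamma> j = 0 \<and> \<gamma> l = 0"
    have "\<beta> j * F j j = \<rho> j" using E[of j j j] jl b by simp
    hence "\<beta> j \<noteq> 0" using \<rho>[of j] jl by auto
    moreover have "\<beta> l * F l l = \<rho> l" using E[of l l l] jl b by simp
    hence "F l l \<noteq> 0" using \<rho>[of l] jl by auto
    moreover have "\<beta> j * F l l = 0" using E[of j l l] jl b by simp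
    ultimately show False by simp
  qed
  show False using bg'[of j1] bg'[of j2] bg'[of j3] nb[of j1 j2] nb[of j1 j3] nb[of j2 j3]
      ng[of j1 j2] ng[of j1 j3] ng[of j2 j3] K by auto
qed

lemma good_s:
  fixes A :: "nat \<Rightarrow> nat \<Rightarrow> complex"
  assumes K: "k1 \<noteq> k2" "k1 \<noteq> k3" "k2 \<noteq> k3"
    and a: "\<exists>y\<in>{k1,k2,k3}. A p y \<noteq> 0" and b: "\<exists>y\<in>{k1,k2,k3}. A p' y \<noteq> 0"
  shows "\<exists>s. (\<forall>y\<in>{k1,k2,k3}. s y \<noteq> 0) \<and> (\<Sum>y\<in>{k1,k2,k3}. A p y * s y) \<noteq> 0 \<and> (\<Sum>y\<in>{k1,k2,k3}. A p' y * s y) \<noteq> 0"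
proof -
  define P1 where "P1 = [:A p k1, A p k2, A p k3:]"
  define P2 where "P2 = [:A p' k1, A p' k2, A p' k3:]"
  have "P1 \<noteq> 0" using a unfolding P1_def by auto
  have "P2 \<noteq> 0" using b unfolding P2_def by auto
  have fin: "finite ({z. poly P1 z = 0} \<union> {z. poly P2 z = 0} \<union> {0})"
    using poly_roots_finite[OF \<open>P1 \<noteq> 0\<close>] poly_roots_finite[OF \<open>P2 \<noteq> 0\<close>] by simp
  obtain z :: complex where z: "z \<notin> {z. poly P1 z = 0} \<union> {z. poly P2 z = 0} \<union> {0}"
    using ex_new_if_finite[OF infinite_UNIV_char_0 fin] by blast
  define s where "s y = (if y = k1 then 1 else if y = k2 then z else z^2)" for y
  have s1: "(\<Sum>y\<in>{k1,k2,k3}. A x y * s y) = A x k1 + A x k2 * z + A x k3 * z^2" for x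
    using K by (simp add: s_def)
  have "(\<Sum>y\<in>{k1,k2,k3}. A p y * s y) = poly P1 z" unfolding s1 P1_def by (simp add: algebra_simps power2_eq_square)
  moreover have "(\<Sum>y\<in>{k1,k2,k3}. A p' y * s y) = poly P2 z" unfolding s1 P2_def by (simp add: algebra_simps power2_eq_square)
  moreover have "\<forall>y\<in>{k1,k2,k3}. s y \<noteq> 0" using z by (auto simp: s_def)
  ultimately show ?thesis using z by auto
qed

lemma torus_rows:
  fixes A :: "nat \<Rightarrow> nat \<Rightarrow> complex"
  assumes K: "k1 \<noteq> k2" "k1 \<noteq> k3" "k2 \<noteq> k3"
    and pp: "p \<in> {k1,k2,k3}" "p' \<in> {k1,k2,k3}" "p \<noteq> p'"
    and a: "\<exists>y\<in>{k1,k2,k3}. A p y \<noteq> 0" and b: "\<exists>y\<in>{k1,k2,k3}. A p' y \<noteq> 0"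
  shows "\<exists>t s. (\<forall>x\<in>{k1,k2,k3}. t x \<noteq> 0) \<and> (\<forall>y\<in>{k1,k2,k3}. s y \<noteq> 0) \<and>
     (\<Sum>x\<in>{k1,k2,k3}. \<Sum>y\<in>{k1,k2,k3}. t x * s y * A x y) = 0"
proof -
  define K where "K = {k1,k2,k3}"
  obtain s where s: "\<forall>y\<in>K. s y \<noteq> 0" "(\<Sum>y\<in>K. A p y * s y) \<noteq> 0" "(\<Sum>y\<in>K. A p' y * s y) \<noteq> 0"
    using good_s[OF K a b] unfolding K_def by blast
  define u where "u x = (\<Sum>y\<in>K. A x y * s y)" for x
  define R where "R = (\<Sum>x\<in>K - {p} - {p'}. u x)"
  obtain lam :: complex where lam: "lam \<noteq> 0" "lam * u p + R \<noteq> 0"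
  proof (cases "u p + R = 0")
    case True
    hence R: "R = - u p" by (simp add: eq_neg_iff_add_eq_0 add.commute)
    have "u p \<noteq> 0" using s(2) by (simp add: u_def)
    hence "2 * u p + R \<noteq> 0" by (simp add: R)
    thus ?thesis using that[of 2] by simp
  next
    case False
    thus ?thesis using that[of 1] by simp
  qed
  define mu where "mu = - (lam * u p + R) / u p'"
  have up': "u p' \<noteq> 0" using s(3) by (simp add: u_def)
  have m1: "mu * u p' = - (lam * u p + R)" using up' by (simp add: mu_def)
  have mu: "mu \<noteq> 0"
  proof
    assume "mu = 0"
    hence "- (lam * u p + R) = 0" using m1 by (metis mult_zero_left)
    thus False using lam(2) by (simp only: neg_equal_0_iff_equal)
  qed
  define t where "t x = (if x = p then lam else if x = p' then mu else 1)" for x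
  have tnz: "\<forall>x\<in>K. t x \<noteq> 0" using lam mu by (simp add: t_def)
  have fK: "finite K" by (simp add: K_def)
  have pK: "p \<in> K" "p' \<in> K" using pp by (auto simp: K_def)
  have "(\<Sum>x\<in>K. \<Sum>y\<in>K. t x * s y * A x y) = (\<Sum>x\<in>K. t x * u x)"
    by (simp add: u_def sum_distrib_left algebra_simps)
  also have "\<dots> = t p * u p + (\<Sum>x\<in>K - {p}. t x * u x)"
    using sum.remove[OF fK pK(1)] by simp
  also have "(\<Sum>x\<in>K - {p}. t x * u x) = t p' * u p' + (\<Sum>x\<in>K - {p} - {p'}. t x * u x)"
    using sum.remove[of "K - {p}" p'] fK pK pp by simp
  also have "(\<Sum>x\<in>K - {p} - {p'}. t x * u x) = R"
    unfolding R_def by (rule sum.cong) (auto simp: t_def)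
  finally have "(\<Sum>x\<in>K. \<Sum>y\<in>K. t x * s y * A x y) = lam * u p + mu * u p' + R"
    using pp by (simp add: t_def)
  also have "\<dots> = 0" by (simp add: m1)
  finally show ?thesis using tnz s(1) unfolding K_def by blast
qed

lemma torus:
  fixes A :: "nat \<Rightarrow> nat \<Rightarrow> complex"
  assumes K: "k1 \<noteq> k2" "k1 \<noteq> k3" "k2 \<noteq> k3"
    and pq: "p \<in> {k1,k2,k3}" "q \<in> {k1,k2,k3}" "p' \<in> {k1,k2,k3}" "q' \<in> {k1,k2,k3}" "(p,q) \<noteq> (p',q')"
    and nz: "A p q \<noteq> 0" "A p' q' \<noteq> 0"
  shows "\<exists>t s. (\<forall>x\<in>{k1,k2,k3}. t x \<noteq> 0) \<and> (\<forall>y\<in>{k1,k2,k3}. s y \<noteq> 0) \<and>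
     (\<Sum>x\<in>{k1,k2,k3}. \<Sum>y\<in>{k1,k2,k3}. t x * s y * A x y) = 0"
proof (cases "p = p'")
  case False
  show ?thesis by (rule torus_rows[OF K pq(1) pq(3) False]) (use nz pq in auto)
next
  case True
  hence qq: "q \<noteq> q'" using pq by auto
  obtain t s where ts: "\<forall>x\<in>{k1,k2,k3}. t x \<noteq> 0" "\<forall>y\<in>{k1,k2,k3}. s y \<noteq> 0"
     "(\<Sum>x\<in>{k1,k2,k3}. \<Sum>y\<in>{k1,k2,k3}. t x * s y * A y x) = 0"
    using torus_rows[OF K pq(2) pq(4) qq, of "\<lambda>x y. A y x"] nz pq by blast
  have "(\<Sum>x\<in>{k1,k2,k3}. \<Sum>y\<in>{k1,k2,k3}. s x * t y * A x y) = (\<Sum>x\<in>{k1,k2,k3}. \<Sum>y\<in>{k1,k2,k3}. t x * s y * A y x)"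
    by (subst sum.swap) (simp add: algebra_simps)
  thus ?thesis using ts by (intro exI[of _ s] exI[of _ t]) simp
qed

definition stp :: "('v \<Rightarrow> 'v) \<Rightarrow> ('v \<Rightarrow> 'v) \<Rightarrow> nat \<Rightarrow> 'v \<Rightarrow> 'v" where
  "stp h1 h2 i = (if even i then h1 else h2)"

primrec sq :: "('v \<Rightarrow> 'v) \<Rightarrow> ('v \<Rightarrow> 'v) \<Rightarrow> 'v \<Rightarrow> nat \<Rightarrow> 'v" where
  "sq h1 h2 x0 0 = x0"
| "sq h1 h2 x0 (Suc i) = stp h1 h2 i (sq h1 h2 x0 i)"

definition invol :: "'v set \<Rightarrow> ('v \<Rightarrow> 'v) \<Rightarrow> bool" where
  "invol V h \<longleftrightarrow> (\<forall>x\<in>V. h x \<in> V \<and> h x \<noteq> x \<and> h (h x) = x)"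

definition ham :: "'v set \<Rightarrow> ('v \<Rightarrow> 'v) \<Rightarrow> ('v \<Rightarrow> 'v) \<Rightarrow> nat \<Rightarrow> (nat \<Rightarrow> 'v) \<Rightarrow> bool" where
  "ham V h1 h2 n u \<longleftrightarrow> (\<forall>i. u (Suc i) = stp h1 h2 i (u i)) \<and> (\<forall>i. u (i + n) = u i) \<and> even n \<and> 0 < n
     \<and> bij_betw u {..<n} V"

definition good :: "'v set \<Rightarrow> ('v \<Rightarrow> 'v) \<Rightarrow> ('v \<Rightarrow> 'v) \<Rightarrow> ('v \<Rightarrow> 'v) \<Rightarrow> 'v set \<Rightarrow> 'v set \<Rightarrow> 'v set \<Rightarrow> bool" where
  "good V h1 h2 h3 A B C \<longleftrightarrow> A \<union> B \<union> C = V \<and> A \<inter> B = {} \<and> A \<inter> C = {} \<and> B \<inter> C = {}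
     \<and> (\<forall>x\<in>A. h1 x \<in> A) \<and> (\<forall>x\<in>B. h2 x \<in> B) \<and> (\<forall>x\<in>C. h3 x \<in> C) \<and> A \<noteq> V \<and> B \<noteq> V \<and> C \<noteq> V"

lemma good_swap: "good V h1 h2 h3 A B C \<Longrightarrow> good V h2 h1 h3 B A C"
  unfolding good_def by blast

lemma stp_invol: "invol V h1 \<Longrightarrow> invol V h2 \<Longrightarrow> invol V (stp h1 h2 i)"
  by (simp add: stp_def)

lemma involD: "invol V h \<Longrightarrow> x \<in> V \<Longrightarrow> h x \<in> V" "invol V h \<Longrightarrow> x \<in> V \<Longrightarrow> h x \<noteq> x"
  "invol V h \<Longrightarrow> x \<in> V \<Longrightarrow> h (h x) = x"
  by (auto simp: invol_def)

context
  fixes V :: "'v set" and h1 h2 :: "'v \<Rightarrow> 'v" and x0 :: 'v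
  assumes i1: "invol V h1" and i2: "invol V h2" and x0: "x0 \<in> V"
begin

abbreviation "s \<equiv> sq h1 h2 x0"

lemma sq_in: "s i \<in> V"
  by (induction i) (auto simp: x0 involD[OF stp_invol[OF i1 i2]])

lemma sq_back: "s i = stp h1 h2 i (s (Suc i))"
  using involD(3)[OF stp_invol[OF i1 i2] sq_in[of i]] by simp

lemma stp_par: "even a = even b \<Longrightarrow> stp h1 h2 a = stp h1 h2 b"
  by (simp add: stp_def)

lemma sq_bwd: "s (a + t) = s (b + t) \<Longrightarrow> even a = even b \<Longrightarrow> s a = s b"
proof (induction t)
  case 0 thus ?case by simp
next
  case (Suc t)
  have "s (a + t) = stp h1 h2 (a+t) (s (Suc (a + t)))" by (rule sq_back)
  also have "\<dots> = stp h1 h2 (b+t) (s (Suc (b + t)))"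
    using Suc.prems stp_par[of "a+t" "b+t"] by simp
  also have "\<dots> = s (b + t)" by (rule sq_back[symmetric])
  finally show ?case using Suc by simp
qed

lemma sq_fwd: "s a = s b \<Longrightarrow> even a = even b \<Longrightarrow> s (a + t) = s (b + t)"
proof (induction t)
  case 0 thus ?case by simp
next
  case (Suc t)
  thus ?case using stp_par[of "a+t" "b+t"] by simp
qed

lemma sq_mid: "s i = s (i + 2*t + 1) \<Longrightarrow> False"
proof (induction t arbitrary: i)
  case 0
  thus ?case using involD(2)[OF stp_invol[OF i1 i2] sq_in[of i], of i] by simp
next
  case (Suc t)
  have "s (Suc i) = stp h1 h2 i (s i)" by simp
  also have "\<dots> = stp h1 h2 (i + 2*t + 2) (s (i + 2 * Suc t + 1))"
    using Suc.prems stp_par[of i "i + 2*t+2"] by simp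
  also have "\<dots> = s (i + 2*t + 2)"
    using sq_back[of "i + 2*t + 2", symmetric] by (simp add: algebra_simps)
  finally have "s (Suc i) = s (Suc i + 2*t + 1)" by simp
  thus ?case by (rule Suc.IH)
qed

lemma sq_period_ex: assumes "finite V" shows "\<exists>P>0. even P \<and> s P = s 0"
proof -
  define f where "f i = s (2*i)" for i
  have "\<not> inj_on f {..card V}"
  proof
    assume "inj_on f {..card V}"
    moreover have "f ` {..card V} \<subseteq> V" using sq_in by (auto simp: f_def)
    ultimately have "card {..card V} \<le> card V" using card_inj_on_le assms by blast
    thus False by simp
  qed
  then obtain i j where ij: "i \<le> card V" "j \<le> card V" "i \<noteq> j" "f i = f j"
    unfolding inj_on_def by auto
  define a b where "a = min i j" and "b = max i j"
  have ab: "a < b" "s (2*a) = s (2*b)" using ij by (auto simp: a_def b_def f_def min_def max_def)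
  have "s (0 + 2*a) = s (2*(b-a) + 2*a)" using ab by (simp add: algebra_simps)
  hence "s 0 = s (2*(b-a))" by (rule sq_bwd) simp
  thus ?thesis using ab by (intro exI[of _ "2*(b-a)"]) auto
qed

lemma ham_ex:
  assumes fin: "finite V"
    and nocl: "\<And>S. S \<subseteq> V \<Longrightarrow> S \<noteq> {} \<Longrightarrow> (\<forall>x\<in>S. h1 x \<in> S \<and> h2 x \<in> S) \<Longrightarrow> S = V"
  shows "ham V h1 h2 (card V) s"
proof -
  define P0 where "P0 = (LEAST P. 0 < P \<and> even P \<and> s P = s 0)"
  have P0: "0 < P0 \<and> even P0 \<and> s P0 = s 0"
    unfolding P0_def by (rule LeastI_ex) (use sq_period_ex[OF fin] in blast)
  have P0min: "P0 \<le> P" if "0 < P" "even P" "s P = s 0" for P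
    unfolding P0_def by (rule Least_le) (use that in blast)
  have per: "s (i + P0) = s i" for i
    using sq_fwd[of 0 P0 i] P0 by (simp add: add.commute)
  have inj: "inj_on s {..<P0}"
  proof (rule inj_onI)
    have main: "False" if ij: "i < j" "j < P0" "s i = s j" for i j
    proof (cases "even (j - i)")
      case True
      have "s (0 + i) = s ((j - i) + i)" using ij by simp
      hence "s 0 = s (j - i)" by (rule sq_bwd) (use True in simp)
      hence "P0 \<le> j - i" using P0min[of "j - i"] True ij by simp
      thus False using ij by simp
    next
      case False
      then obtain t where t: "j - i = 2*t + 1" by (metis oddE)
      hence "j = i + 2*t + 1" using ij by simp
      thus False using sq_mid[of i t] ij by simp
    qed
    fix i j assume "i \<in> {..<P0}" "j \<in> {..<P0}" "s i = s j"
    thus "i = j" using main[of i j] main[of j i] by (cases i j rule: linorder_cases) auto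
  qed
  define T where "T = s ` {..<P0}"
  have TV: "T \<subseteq> V" using sq_in by (auto simp: T_def)
  have cl1: "stp h1 h2 i (s i) \<in> T" if "i < P0" for i
  proof (cases "Suc i < P0")
    case True
    have "stp h1 h2 i (s i) = s (Suc i)" by simp
    thus ?thesis unfolding T_def by (rule rev_image_eqI[of "Suc i", rotated]) (use True in auto)
  next
    case False
    hence "Suc i = P0" using that by simp
    hence "stp h1 h2 i (s i) = s 0" using P0 by (metis sq.simps(2))
    moreover have "s 0 \<in> T" unfolding T_def by (rule imageI) (use P0 in simp)
    ultimately show ?thesis by simp
  qed
  have cl2: "stp h1 h2 (Suc i) (s i) \<in> T" if "i < P0" for i
  proof (cases i)
    case 0
    have P1: "Suc (P0 - 1) = P0" "odd (P0 - 1)" using P0 by auto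
    have "s 0 = stp h1 h2 (P0 - 1) (s (P0 - 1))" using P0 sq.simps(2)[of h1 h2 x0 "P0 - 1"] P1 by simp
    moreover have "stp h1 h2 (Suc 0) = stp h1 h2 (P0 - 1)" by (rule stp_par) (use P1 in simp)
    ultimately have "stp h1 h2 (Suc 0) (s 0) = s (P0 - 1)"
      using involD(3)[OF stp_invol[OF i1 i2] sq_in[of "P0 - 1"], of "P0 - 1"] by simp
    thus ?thesis using 0 P0 by (auto simp: T_def)
  next
    case (Suc k)
    have "s i = stp h1 h2 k (s k)" unfolding Suc by (rule sq.simps(2))
    moreover have "stp h1 h2 (Suc i) = stp h1 h2 k" by (rule stp_par) (simp add: Suc)
    ultimately have "stp h1 h2 (Suc i) (s i) = s k"
      using involD(3)[OF stp_invol[OF i1 i2] sq_in[of k], of k] by simp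
    thus ?thesis using Suc that by (auto simp: T_def)
  qed
  have "T = V"
  proof (rule nocl[OF TV])
    show "T \<noteq> {}" using P0 by (auto simp: T_def)
    show "\<forall>x\<in>T. h1 x \<in> T \<and> h2 x \<in> T"
    proof
      fix x assume "x \<in> T"
      then obtain i where i: "i < P0" "x = s i" by (auto simp: T_def)
      show "h1 x \<in> T \<and> h2 x \<in> T"
        using cl1[OF i(1)] cl2[OF i(1)] i by (cases "even i") (auto simp: stp_def)
    qed
  qed
  hence bij: "bij_betw s {..<P0} V" using inj by (simp add: bij_betw_def T_def)
  hence "card V = P0" using bij_betw_same_card by fastforce
  thus ?thesis using bij P0 per by (simp add: ham_def)
qed

end

lemma hamD: assumes "ham V h1 h2 n u"
  shows "u (Suc i) = stp h1 h2 i (u i)" "u (i + n) = u i" "even n" "0 < n" "bij_betw u {..<n} V"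
  using assms unfolding ham_def by blast+

lemma ham_mod: "ham V h1 h2 n u \<Longrightarrow> u i = u (i mod n)"
proof -
  assume h: "ham V h1 h2 n u"
  have "u (j + n * k) = u j" for j k
  proof (induction k)
    case (Suc k)
    have "u (j + n * Suc k) = u ((j + n*k) + n)" by (simp add: algebra_simps)
    also have "\<dots> = u (j + n*k)" by (rule hamD(2)[OF h])
    finally show ?case using Suc by simp
  qed simp
  from this[of "i mod n" "i div n"] show ?thesis by simp
qed

lemma ham_in: "ham V h1 h2 n u \<Longrightarrow> u i \<in> V"
proof -
  assume h: "ham V h1 h2 n u"
  have "u i = u (i mod n)" by (rule ham_mod[OF h])
  moreover have "i mod n < n" using hamD(4)[OF h] by simp
  ultimately show "u i \<in> V" using hamD(5)[OF h] by (auto simp: bij_betw_def)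
qed

lemma ham_shift:
  assumes h: "ham V h1 h2 n u"
  shows "ham V (if even e then h1 else h2) (if even e then h2 else h1) n (\<lambda>j. u (e + j))"
proof -
  have step: "u (e + Suc j) = stp (if even e then h1 else h2) (if even e then h2 else h1) j (u (e + j))" for j
  proof -
    have "u (e + Suc j) = stp h1 h2 (e + j) (u (e + j))" using hamD(1)[OF h, of "e+j"] by simp
    moreover have "stp h1 h2 (e + j) = stp (if even e then h1 else h2) (if even e then h2 else h1) j"
      unfolding stp_def by (cases "even e"; cases "even j") auto
    ultimately show ?thesis by simp
  qed
  have per: "u (e + (j + n)) = u (e + j)" for j using hamD(2)[OF h, of "e+j"] by (metis add.assoc)
  have bu: "bij_betw u {..<n} V" and n: "0 < n" "even n" using hamD[OF h] by auto
  have cardV: "card V = n" using bij_betw_same_card[OF bu] by simp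
  have finV: "finite V" using bu bij_betw_finite by blast
  have inj: "inj_on (\<lambda>j. u (e + j)) {..<n}"
  proof (rule inj_onI)
    fix i j assume i: "i \<in> {..<n}" and j: "j \<in> {..<n}" and eq: "u (e + i) = u (e + j)"
    have "u ((e+i) mod n) = u ((e+j) mod n)" using eq ham_mod[OF h, of "e+i"] ham_mod[OF h, of "e+j"] by simp
    hence m: "(e+i) mod n = (e+j) mod n" using bu n by (auto simp: bij_betw_def inj_on_def)
    have no: "False" if ab: "a < b" "b < n" "(e+a) mod n = (e+b) mod n" for a b
    proof -
      have "n dvd (e+b) - (e+a)" using mod_eq_dvd_iff_nat[of "e+a" "e+b" n] ab by simp
      hence "n dvd b - a" by simp
      thus False using ab nat_dvd_not_less[of "b - a" n] by simp
    qed
    show "i = j"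
    proof (rule ccontr)
      assume "i \<noteq> j"
      hence "i < j \<or> j < i" by arith
      thus False
      proof
        assume "i < j" thus False using no[of i j] j m by simp
      next
        assume "j < i" thus False using no[of j i] i m by simp
      qed
    qed
  qed
  have img: "(\<lambda>j. u (e + j)) ` {..<n} = V"
  proof (rule card_subset_eq[OF finV])
    show "(\<lambda>j. u (e + j)) ` {..<n} \<subseteq> V" using ham_in[OF h] by auto
    show "card ((\<lambda>j. u (e + j)) ` {..<n}) = card V" using card_image[OF inj] cardV by simp
  qed
  show ?thesis unfolding ham_def bij_betw_def
  proof (intro conjI allI)
    fix i show "u (e + Suc i) = stp (if even e then h1 else h2) (if even e then h2 else h1) i (u (e + i))"
      by (rule step)
  next
    fix i show "u (e + (i + n)) = u (e + i)" by (rule per)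
  qed (simp_all add: n inj img)
qed

lemma seg:
  assumes h: "ham V H1 H2 n u" and i1: "invol V H1" and i2: "invol V H2"
    and j: "lo \<le> j" "j < hi" and par: "even lo = even hi"
  shows "stp H1 H2 lo (u j) \<in> u ` {lo..<hi}"
proof (cases "even j = even lo")
  case True
  have "stp H1 H2 lo (u j) = u (Suc j)" using hamD(1)[OF h, of j] True by (simp add: stp_def)
  moreover have "Suc j \<noteq> hi" using True par by auto
  hence "Suc j < hi" using j by simp
  ultimately show ?thesis using j by auto
next
  case False
  hence jlo: "lo < j" using j by (cases "j = lo") auto
  obtain k where k: "j = Suc k" using jlo by (cases j) auto
  have "u j = stp H1 H2 k (u k)" using hamD(1)[OF h, of k] k by simp
  moreover have "stp H1 H2 k = stp H1 H2 lo" using False k by (simp add: stp_def)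
  ultimately have "stp H1 H2 lo (u j) = u k"
    using involD(3)[OF stp_invol[OF i1 i2] ham_in[OF h], of lo k] by simp
  moreover have "k \<in> {lo..<hi}" using k jlo j by auto
  ultimately show ?thesis by auto
qed

lemma part_img:
  assumes bu: "bij_betw u {..<n} V" and cov: "IA \<union> IB \<union> IC = {..<n}"
    and d: "IA \<inter> IB = {}" "IA \<inter> IC = {}" "IB \<inter> IC = {}"
  shows "u`IA \<union> u`IB \<union> u`IC = V" "u`IA \<inter> u`IB = {}" "u`IA \<inter> u`IC = {}" "u`IB \<inter> u`IC = {}"
proof -
  have inj: "inj_on u {..<n}" and im: "u ` {..<n} = V" using bu by (auto simp: bij_betw_def)
  show "u`IA \<union> u`IB \<union> u`IC = V" using im cov by (metis image_Un)
  show "u`IA \<inter> u`IB = {}" using inj_on_image_Int[OF inj, of IA IB] cov d by auto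
  show "u`IA \<inter> u`IC = {}" using inj_on_image_Int[OF inj, of IA IC] cov d by auto
  show "u`IB \<inter> u`IC = {}" using inj_on_image_Int[OF inj, of IB IC] cov d by auto
qed

lemma consA:
  assumes h: "ham V H1 H2 n u" and i1: "invol V H1" and i2: "invol V H2" and i3: "invol V H3"
    and n5: "5 \<le> n" and hd: "H3 (u 0) = u d" and d: "odd d" "d < n"
  shows "\<exists>A B C. good V H1 H2 H3 A B C"
proof -
  have bu: "bij_betw u {..<n} V" and ev: "even n" using hamD[OF h] by auto
  have cardV: "card V = n" using bij_betw_same_card[OF bu] by simp
  define IA where "IA = {Suc d..<n}"
  define IB where "IB = {1..<d}"
  define IC where "IC = {0, d}"
  have cov: "IA \<union> IB \<union> IC = {..<n}" using d by (auto simp: IA_def IB_def IC_def)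
  have dis: "IA \<inter> IB = {}" "IA \<inter> IC = {}" "IB \<inter> IC = {}" by (auto simp: IA_def IB_def IC_def)
  note P = part_img[OF bu cov dis]
  have cA: "\<forall>x\<in>u`IA. H1 x \<in> u`IA"
  proof
    fix x assume "x \<in> u ` IA" then obtain j where j: "j \<in> IA" "x = u j" by auto
    have "stp H1 H2 (Suc d) (u j) \<in> u ` {Suc d..<n}"
      by (rule seg[OF h i1 i2]) (use j d ev in \<open>auto simp: IA_def\<close>)
    moreover have "stp H1 H2 (Suc d) = H1" using d by (simp add: stp_def)
    ultimately show "H1 x \<in> u ` IA" using j by (simp add: IA_def)
  qed
  have cB: "\<forall>x\<in>u`IB. H2 x \<in> u`IB"
  proof
    fix x assume "x \<in> u ` IB" then obtain j where j: "j \<in> IB" "x = u j" by auto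
    have "stp H1 H2 1 (u j) \<in> u ` {1..<d}"
      by (rule seg[OF h i1 i2]) (use j d in \<open>auto simp: IB_def\<close>)
    moreover have "stp H1 H2 1 = H2" by (simp add: stp_def)
    ultimately show "H2 x \<in> u ` IB" using j by (simp add: IB_def)
  qed
  have u0: "u 0 \<in> V" by (rule ham_in[OF h])
  have cC: "\<forall>x\<in>u`IC. H3 x \<in> u`IC"
  proof
    fix x assume "x \<in> u ` IC"
    hence "x = u 0 \<or> x = u d" by (simp add: IC_def)
    moreover have "H3 (u d) = u 0" using hd involD(3)[OF i3 u0] by metis
    ultimately show "H3 x \<in> u ` IC" using hd by (auto simp: IC_def)
  qed
  have "card (u ` IC) \<le> card IC" by (rule card_image_le) (simp add: IC_def)
  also have "card IC \<le> 2" by (simp add: IC_def card_insert_if)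
  finally have cIC: "card (u ` IC) \<le> 2" .
  have nC: "u ` IC \<noteq> V"
  proof
    assume "u ` IC = V"
    hence "card V \<le> 2" using cIC by simp
    thus False using cardV n5 by simp
  qed
  have u0C: "u 0 \<in> u ` IC" by (simp add: IC_def)
  have nA: "u ` IA \<noteq> V" using P(3) u0C u0 by blast
  have nB: "u ` IB \<noteq> V" using P(4) u0C u0 by blast
  have "good V H1 H2 H3 (u`IA) (u`IB) (u`IC)"
    unfolding good_def using P cA cB cC nA nB nC by (intro conjI) assumption+
  thus ?thesis by blast
qed

lemma consB:
  assumes h: "ham V H1 H2 n u" and i1: "invol V H1" and i2: "invol V H2" and i3: "invol V H3"
    and n5: "5 \<le> n" and c1: "H3 (u 0) = u e3" and c2: "H3 (u e2) = u e4"
    and o: "0 < e2" "e2 < e3" "e3 < e4" "e4 < n" "odd e2" "even e3" "odd e4"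
  shows "\<exists>A B C. good V H1 H2 H3 A B C"
proof -
  have bu: "bij_betw u {..<n} V" and ev: "even n" using hamD[OF h] by auto
  have cardV: "card V = n" using bij_betw_same_card[OF bu] by simp
  define IA where "IA = {Suc e2..<e3} \<union> {Suc e4..<n}"
  define IB where "IB = {1..<e2} \<union> {Suc e3..<e4}"
  define IC where "IC = {0, e2, e3, e4}"
  have cov: "IA \<union> IB \<union> IC = {..<n}" using o by (auto simp: IA_def IB_def IC_def)
  have dis: "IA \<inter> IB = {}" "IA \<inter> IC = {}" "IB \<inter> IC = {}" using o by (auto simp: IA_def IB_def IC_def)
  note P = part_img[OF bu cov dis]
  have cA: "\<forall>x\<in>u`IA. H1 x \<in> u`IA"
  proof
    fix x assume "x \<in> u ` IA" then obtain j where j: "j \<in> IA" "x = u j" by auto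
    show "H1 x \<in> u ` IA"
    proof (cases "j < e3")
      case True
      have "stp H1 H2 (Suc e2) (u j) \<in> u ` {Suc e2..<e3}"
        by (rule seg[OF h i1 i2]) (use j o True in \<open>auto simp: IA_def\<close>)
      moreover have "stp H1 H2 (Suc e2) = H1" using o by (simp add: stp_def)
      ultimately show ?thesis using j by (auto simp: IA_def)
    next
      case False
      have "stp H1 H2 (Suc e4) (u j) \<in> u ` {Suc e4..<n}"
        by (rule seg[OF h i1 i2]) (use j o False ev in \<open>auto simp: IA_def\<close>)
      moreover have "stp H1 H2 (Suc e4) = H1" using o by (simp add: stp_def)
      ultimately show ?thesis using j by (auto simp: IA_def)
    qed
  qed
  have cB: "\<forall>x\<in>u`IB. H2 x \<in> u`IB"
  proof
    fix x assume "x \<in> u ` IB" then obtain j where j: "j \<in> IB" "x = u j" by auto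
    show "H2 x \<in> u ` IB"
    proof (cases "j < e2")
      case True
      have "stp H1 H2 1 (u j) \<in> u ` {1..<e2}"
        by (rule seg[OF h i1 i2]) (use j o True in \<open>auto simp: IB_def\<close>)
      moreover have "stp H1 H2 1 = H2" by (simp add: stp_def)
      ultimately show ?thesis using j by (auto simp: IB_def)
    next
      case False
      have "stp H1 H2 (Suc e3) (u j) \<in> u ` {Suc e3..<e4}"
        by (rule seg[OF h i1 i2]) (use j o False in \<open>auto simp: IB_def\<close>)
      moreover have "stp H1 H2 (Suc e3) = H2" using o by (simp add: stp_def)
      ultimately show ?thesis using j by (auto simp: IB_def)
    qed
  qed
  have u0: "u 0 \<in> V" by (rule ham_in[OF h])
  have ue2: "u e2 \<in> V" by (rule ham_in[OF h])
  have cC: "\<forall>x\<in>u`IC. H3 x \<in> u`IC"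
  proof
    fix x assume "x \<in> u ` IC"
    hence x4: "x = u 0 \<or> x = u e2 \<or> x = u e3 \<or> x = u e4" by (simp add: IC_def)
    have h3: "H3 (u e3) = u 0" using c1 involD(3)[OF i3 u0] by metis
    have h4: "H3 (u e4) = u e2" using c2 involD(3)[OF i3 ue2] by metis
    have m: "u 0 \<in> u ` IC" "u e2 \<in> u ` IC" "u e3 \<in> u ` IC" "u e4 \<in> u ` IC" by (simp_all add: IC_def)
    show "H3 x \<in> u ` IC" using x4 m c1 c2 h3 h4 by (elim disjE) simp_all
  qed
  have "card (u ` IC) \<le> card IC" by (rule card_image_le) (simp add: IC_def)
  also have "card IC \<le> 4" by (simp add: IC_def card_insert_if)
  finally have cIC: "card (u ` IC) \<le> 4" .
  have nC: "u ` IC \<noteq> V"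
  proof
    assume "u ` IC = V"
    hence "card V \<le> 4" using cIC by simp
    thus False using cardV n5 by simp
  qed
  have u0C: "u 0 \<in> u ` IC" by (simp add: IC_def)
  have nA: "u ` IA \<noteq> V" using P(3) u0C u0 by blast
  have nB: "u ` IB \<noteq> V" using P(4) u0C u0 by blast
  have "good V H1 H2 H3 (u`IA) (u`IB) (u`IC)"
    unfolding good_def using P cA cB cC nA nB nC by (intro conjI) assumption+
  thus ?thesis by blast
qed

lemma good_shift:
  "good V (if even e then h1 else h2) (if even e then h2 else h1) h3 A B C \<Longrightarrow> \<exists>A B C. good V h1 h2 h3 A B C"
  by (cases "even e") (auto dest: good_swap)

theorem comb:
  assumes fin: "finite V" and c5: "5 \<le> card V"
    and i1: "invol V h1" and i2: "invol V h2" and i3: "invol V h3"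
  shows "\<exists>A B C. good V h1 h2 h3 A B C"
proof (cases "\<exists>S. S \<subseteq> V \<and> S \<noteq> {} \<and> S \<noteq> V \<and> (\<forall>x\<in>S. h1 x \<in> S \<and> h2 x \<in> S)")
  case True
  then obtain S where S: "S \<subseteq> V" "S \<noteq> {}" "S \<noteq> V" "\<forall>x\<in>S. h1 x \<in> S \<and> h2 x \<in> S" by blast
  have "V \<noteq> {}" using c5 by auto
  moreover have "\<forall>x\<in>V - S. h2 x \<in> V - S"
  proof
    fix x assume x: "x \<in> V - S"
    have "h2 x \<in> V" using involD(1)[OF i2] x by auto
    moreover have "h2 x \<notin> S"
    proof
      assume "h2 x \<in> S"
      hence "h2 (h2 x) \<in> S" using S by auto
      thus False using involD(3)[OF i2] x by auto
    qed
    ultimately show "h2 x \<in> V - S" by simp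
  qed
  ultimately have "good V h1 h2 h3 S (V - S) {}" unfolding good_def using S by auto
  thus ?thesis by blast
next
  case False
  have nocl: "S = V" if "S \<subseteq> V" "S \<noteq> {}" "\<forall>x\<in>S. h1 x \<in> S \<and> h2 x \<in> S" for S
  proof (rule ccontr)
    assume "S \<noteq> V"
    hence "\<exists>S. S \<subseteq> V \<and> S \<noteq> {} \<and> S \<noteq> V \<and> (\<forall>x\<in>S. h1 x \<in> S \<and> h2 x \<in> S)" using that by blast
    thus False using False by simp
  qed
  have Vne: "V \<noteq> {}" using c5 by auto
  define x0 where "x0 = (SOME x. x \<in> V)"
  have x0: "x0 \<in> V" unfolding x0_def using Vne by (simp add: some_in_eq)
  define n where "n = card V"
  define u where "u = sq h1 h2 x0"
  have h: "ham V h1 h2 n u" unfolding n_def u_def by (rule ham_ex[OF i1 i2 x0 fin nocl])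
  have bu: "bij_betw u {..<n} V" and ev: "even n" and n5: "5 \<le> n" using hamD[OF h] c5 n_def by auto
  have inj: "inj_on u {..<n}" and img: "u ` {..<n} = V" using bu by (auto simp: bij_betw_def)
  define sg where "sg i = the_inv_into {..<n} u (h3 (u i))" for i
  have sg1: "sg i < n" "u (sg i) = h3 (u i)" if "i < n" for i
  proof -
    have "h3 (u i) \<in> u ` {..<n}" using img involD(1)[OF i3 ham_in[OF h]] by simp
    thus "sg i < n" "u (sg i) = h3 (u i)"
      unfolding sg_def using the_inv_into_into[OF inj, of "h3 (u i)" "{..<n}"] f_the_inv_into_f[OF inj] by auto
  qed
  have sg2: "sg (sg i) = i" if "i < n" for i
  proof -
    have "u (sg (sg i)) = u i" using sg1[OF that] sg1[OF sg1(1)[OF that]] involD(3)[OF i3 ham_in[OF h]] by simp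
    thus ?thesis using inj sg1 that unfolding inj_on_def by auto
  qed
  have sg3: "sg i \<noteq> i" if "i < n" for i
    using sg1[OF that] involD(2)[OF i3 ham_in[OF h], of i] by auto
  have umod: "u (e + j) = u ((e + j) mod n)" for e j by (rule ham_mod[OF h])
  show ?thesis
  proof (cases "\<exists>i<n. odd (i + sg i)")
    case True
    then obtain e where e: "e < n" "odd (e + sg e)" by blast
    define d where "d = (sg e + n - e) mod n"
    have dn: "d < n" using ev n5 by (simp add: d_def)
    have "odd (sg e + n - e)" using e ev sg1[OF e(1)] by (simp add: odd_add)
    hence dodd: "odd d" using ev unfolding d_def by (metis dvd_mod_iff)
    have "(e + d) mod n = (e + (sg e + n - e)) mod n" unfolding d_def by (simp add: mod_add_right_eq)
    also have "e + (sg e + n - e) = sg e + n" using e by simp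
    also have "(sg e + n) mod n = sg e" using sg1[OF e(1)] by simp
    finally have "u (e + d) = u (sg e)" using umod by metis
    hence hd: "h3 ((\<lambda>j. u (e + j)) 0) = (\<lambda>j. u (e + j)) d" using sg1[OF e(1)] by simp
    have i1': "invol V (if even e then h1 else h2)" and i2': "invol V (if even e then h2 else h1)"
      using i1 i2 by auto
    show ?thesis
      using consA[OF ham_shift[OF h, of e] i1' i2' i3 n5 hd dodd dn] good_shift by blast
  next
    case False
    hence evc: "even (i + sg i)" if "i < n" for i using that by auto
    define D where "D = {(p,q). p < q \<and> q < n \<and> sg p = q}"
    have "n > 0" using n5 by simp
    hence "(0, sg 0) \<in> D" using sg1[of 0] sg3[of 0] by (auto simp: D_def)
    then obtain pq where pq: "pq \<in> D" and mn: "\<And>y. y \<in> D \<Longrightarrow> (\<lambda>(p,q). q - p) pq \<le> (\<lambda>(p,q). q - p) y"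
      using ex_has_least_nat[of "\<lambda>x. x \<in> D" "(0, sg 0)" "\<lambda>(p,q). q - p"] by blast
    obtain p q where pqd: "pq = (p,q)" by (cases pq)
    have pq1: "p < q" "q < n" "sg p = q" using pq pqd by (auto simp: D_def)
    have mn': "q - p \<le> q' - p'" if "p' < q'" "q' < n" "sg p' = q'" for p' q'
      using mn[of "(p',q')"] that pqd by (auto simp: D_def)
    have pn: "p < n" using pq1 by simp
    have epq: "even (p + q)" using evc[OF pn] pq1 by simp
    have sp: "Suc p < q"
    proof -
      have "q \<noteq> Suc p" using epq by auto
      thus ?thesis using pq1 by simp
    qed
    define r where "r = sg (Suc p)"
    have sp_n: "Suc p < n" using sp pq1 by simp
    have rn: "r < n" and ur: "u r = h3 (u (Suc p))" using sg1[OF sp_n] by (auto simp: r_def)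
    have sr: "sg r = Suc p" using sg2[OF sp_n] by (simp add: r_def)
    have er: "even (Suc p + r)" using evc[OF sp_n] by (simp add: r_def)
    have rsp: "r \<noteq> Suc p" using sg3[OF sp_n] by (simp add: r_def)
    have rp: "r \<noteq> p" using sr pq1 sp by auto
    have sq': "sg q = p" using sg2[OF pn] pq1 by simp
    have rq: "r \<noteq> q" using sr sq' by auto
    have notin: "\<not> (Suc p < r \<and> r < q)"
    proof
      assume a: "Suc p < r \<and> r < q"
      have "sg (Suc p) = r" by (simp add: r_def)
      hence "q - p \<le> r - Suc p" using mn'[of "Suc p" r] a rn by blast
      thus False using a by arith
    qed
    have i1o: "invol V (if even e then h1 else h2)" and i2o: "invol V (if even e then h2 else h1)" for e
      using i1 i2 by auto
    show ?thesis
    proof (cases "q < r")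
      case True
      define e where "e = p"
      have c1: "h3 ((\<lambda>j. u (e + j)) 0) = (\<lambda>j. u (e + j)) (q - p)"
        using sg1[OF pn] pq1 by (simp add: e_def)
      have c2: "h3 ((\<lambda>j. u (e + j)) 1) = (\<lambda>j. u (e + j)) (r - p)"
        using ur True pq1 by (simp add: e_def)
      have o: "0 < (1::nat)" "1 < q - p" "q - p < r - p" "r - p < n" "odd (1::nat)" "even (q - p)" "odd (r - p)"
        using sp True pq1 rn epq er by (auto simp: odd_add)
      show ?thesis
        using consB[OF ham_shift[OF h, of e] i1o i2o i3 n5 c1 c2 o] good_shift by blast
    next
      case False
      hence rlt: "r < p" using notin rp rq rsp by auto
      define e where "e = r"
      have c1: "h3 ((\<lambda>j. u (e + j)) 0) = (\<lambda>j. u (e + j)) (Suc p - r)"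
        using sg1[OF rn] sr rlt by (simp add: e_def)
      have c2: "h3 ((\<lambda>j. u (e + j)) (p - r)) = (\<lambda>j. u (e + j)) (q - r)"
        using sg1[OF pn] pq1 rlt by (simp add: e_def)
      have o: "0 < p - r" "p - r < Suc p - r" "Suc p - r < q - r" "q - r < n" "odd (p - r)" "even (Suc p - r)" "odd (q - r)"
        using rlt sp pq1 epq er by (auto simp: odd_add)
      show ?thesis
        using consB[OF ham_shift[OF h, of e] i1o i2o i3 n5 c1 c2 o] good_shift by blast
    qed
  qed
qed

lemma PMs_local: "(\<And>x. x \<in> U \<Longrightarrow> vc x = vc' x) \<Longrightarrow> PMs U ME ends c vc = PMs U ME ends c vc'"
  by (auto simp: PMs_iff)

lemma ext2:
  assumes fin: "finite X" and Y: "Y \<subseteq> X" "card Y \<le> 2" and X: "3 \<le> card X"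
  shows "\<exists>b d r. b \<in> X \<and> d \<in> X \<and> r \<in> X \<and> b \<noteq> d \<and> r \<noteq> b \<and> r \<noteq> d \<and> Y \<subseteq> {b,d}"
proof -
  have finY: "finite Y" using fin Y finite_subset by blast
  have "2 - card Y \<le> card (X - Y)" using card_Diff_subset[OF finY Y(1)] X Y by simp
  then obtain Z where Z: "Z \<subseteq> X - Y" "card Z = 2 - card Y" "finite Z" by (rule obtain_subset_with_card_n)
  have "Y \<inter> Z = {}" using Z by auto
  hence "card (Y \<union> Z) = 2" using card_Un_disjoint[OF finY Z(3)] Z Y by auto
  then obtain b d where bd: "Y \<union> Z = {b,d}" "b \<noteq> d" by (auto simp: card_2_iff)
  have "Y \<union> Z \<subseteq> X" using Z(1) Y(1) by auto
  hence sub: "{b,d} \<subseteq> X" using bd(1) by simp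
  have "X - {b,d} \<noteq> {}"
  proof
    assume "X - {b,d} = {}"
    hence "X \<subseteq> {b,d}" by auto
    hence "card X \<le> card {b,d}" by (rule card_mono[rotated]) simp
    thus False using X bd(2) by simp
  qed
  then obtain r where r: "r \<in> X" "r \<notin> {b,d}" by auto
  have yb: "Y \<subseteq> {b,d}" by (metis Un_upper1 bd(1))
  have bX: "b \<in> X" "d \<in> X" using sub by auto
  have "r \<noteq> b" "r \<noteq> d" using r(2) by auto
  thus ?thesis using yb r(1) bd(2) bX by blast
qed

lemma dsum:
  assumes "finite K" "j \<in> K"
  shows "(\<Sum>k\<in>K. \<Sum>i\<in>K. t k * sv i * (if k = i \<and> i = j \<and> P then 1 else 0)) = (if P then t j * sv j else (0::complex))"
proof -
  have inner: "(\<Sum>i\<in>K. t k * sv i * (if k = i \<and> i = j \<and> P then 1 else 0)) = (if k = j \<and> P then t k * sv j else 0)" for k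
  proof -
    have "(\<Sum>i\<in>K. t k * sv i * (if k = i \<and> i = j \<and> P then 1 else 0)) = (\<Sum>i\<in>K. if i = j then (if k = j \<and> P then t k * sv j else 0) else 0)"
      by (rule sum.cong) auto
    also have "\<dots> = (if k = j \<and> P then t k * sv j else 0)" using assms by simp
    finally show ?thesis .
  qed
  have "(\<Sum>k\<in>K. \<Sum>i\<in>K. t k * sv i * (if k = i \<and> i = j \<and> P then 1 else 0)) = (\<Sum>k\<in>K. if k = j then (if P then t j * sv j else 0) else 0)"
    using inner by (intro sum.cong) auto
  also have "\<dots> = (if P then t j * sv j else 0)" using assms by simp
  finally show ?thesis .
qed

lemma sum_split3:
  fixes t sv :: "nat \<Rightarrow> complex"
  shows "(\<Sum>k\<in>K. \<Sum>i\<in>K. t k * sv i * (A k i * X + B k * Y i + C k * Z i)) =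
    (\<Sum>k\<in>K. \<Sum>i\<in>K. t k * sv i * A k i) * X + (\<Sum>k\<in>K. t k * B k) * (\<Sum>i\<in>K. sv i * Y i) + (\<Sum>k\<in>K. t k * C k) * (\<Sum>i\<in>K. sv i * Z i)"
proof -
  have "(\<Sum>k\<in>K. \<Sum>i\<in>K. t k * sv i * (A k i * X + B k * Y i + C k * Z i)) =
     (\<Sum>k\<in>K. \<Sum>i\<in>K. t k * sv i * A k i * X) + (\<Sum>k\<in>K. \<Sum>i\<in>K. (t k * B k) * (sv i * Y i)) + (\<Sum>k\<in>K. \<Sum>i\<in>K. (t k * C k) * (sv i * Z i))"
    by (simp add: sum.distrib algebra_simps)
  also have "(\<Sum>k\<in>K. \<Sum>i\<in>K. t k * sv i * A k i * X) = (\<Sum>k\<in>K. \<Sum>i\<in>K. t k * sv i * A k i) * X"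
    by (simp add: sum_distrib_right)
  also have "(\<Sum>k\<in>K. \<Sum>i\<in>K. (t k * B k) * (sv i * Y i)) = (\<Sum>k\<in>K. t k * B k) * (\<Sum>i\<in>K. sv i * Y i)"
    by (simp add: sum_product)
  also have "(\<Sum>k\<in>K. \<Sum>i\<in>K. (t k * C k) * (sv i * Z i)) = (\<Sum>k\<in>K. t k * C k) * (\<Sum>i\<in>K. sv i * Z i)"
    by (simp add: sum_product)
  finally show ?thesis .
qed

context
  fixes V :: "'v set" and E :: "'v set set" and ME ends c w and k1 k2 k3 :: nat
  assumes sg: "simple_graph V E" and md: "max_degree V E = 3" and cV: "4 < card V"
    and mg: "multigraph V ME ends" and sk: "skeleton ME ends = E" and ghz: "GHZ V ME ends c w"
    and K: "k1 \<noteq> k2" "k1 \<noteq> k3" "k2 \<noteq> k3"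
    and fe: "feasible V ME ends c (\<lambda>_. k1)" "feasible V ME ends c (\<lambda>_. k2)" "feasible V ME ends c (\<lambda>_. k3)"
begin

lemma finV: "finite V" using sg by (simp add: simple_graph_def)
lemma finME: "finite ME" using mg by (simp add: multigraph_def)
lemma nl: "\<forall>e\<in>ME. fst (ends e) \<noteq> snd (ends e)" using mg by (simp add: multigraph_def)

lemma NB_V: "{v,x} \<in> E \<Longrightarrow> x \<in> V \<and> x \<noteq> v"
proof -
  assume a: "{v,x} \<in> E"
  hence "{v,x} \<subseteq> V" "card {v,x} = 2" using sg by (auto simp: simple_graph_def)
  thus ?thesis by (cases "x = v") auto
qed

lemma NB_card: "v \<in> V \<Longrightarrow> card {x. {v,x} \<in> E} \<le> 3"
proof -
  assume v: "v \<in> V"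
  have finE: "finite E"
    using sg unfolding simple_graph_def by (metis Pow_iff finite_Pow_iff finite_subset subsetI)
  have "Defs.degree E v \<le> max_degree V E"
    unfolding max_degree_def using finV v by (intro Max_ge) auto
  hence dv: "Defs.degree E v \<le> 3" using md by simp
  have "inj_on (\<lambda>x. {v,x}) {x. {v,x} \<in> E}" by (auto simp: inj_on_def doubleton_eq_iff)
  moreover have "(\<lambda>x. {v,x}) ` {x. {v,x} \<in> E} \<subseteq> {e\<in>E. v \<in> e}" by auto
  moreover have "finite {e\<in>E. v \<in> e}" using finE by simp
  ultimately have "card {x. {v,x} \<in> E} \<le> card {e\<in>E. v \<in> e}" by (rule card_inj_on_le)
  thus ?thesis using dv Defs.degree_def[of E v] by linarith
qed

lemma NB_fin: "finite {x. {v,x} \<in> E}"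
proof (rule finite_subset[OF _ finV])
  show "{x. {v,x} \<in> E} \<subseteq> V"
  proof
    fix x assume "x \<in> {x. {v,x} \<in> E}"
    hence "{v,x} \<in> E" by simp
    thus "x \<in> V" using NB_V by blast
  qed
qed

lemma M_nb: "Mx ME ends c w v x p q \<noteq> 0 \<Longrightarrow> {v,x} \<in> E"
proof -
  assume "Mx ME ends c w v x p q \<noteq> 0"
  hence ex: "\<exists>e\<in>ME. endset ends e = {v,x}" by (rule Mx_nz_edge)
  from ex obtain e where e: "e \<in> ME" and eq: "endset ends e = {v,x}" ..
  from e have "endset ends e \<in> endset ends ` ME" by (rule imageI)
  hence "{v,x} \<in> endset ends ` ME" by (simp only: eq)
  thus ?thesis using sk by (simp add: skeleton_def)
qed

lemma expandV: "v \<in> V \<Longrightarrow> WU V ME ends c w vc = (\<Sum>x\<in>V-{v}. Mx ME ends c w v x (vc v) (vc x) * WU (V-{v,x}) ME ends c w vc)"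
  by (rule expand2[OF finME nl _ finV])

lemma ghz1: "(\<forall>x\<in>V. vc x = k) \<Longrightarrow> k \<in> {k1,k2,k3} \<Longrightarrow> WU V ME ends c w vc = 1"
proof -
  assume a: "\<forall>x\<in>V. vc x = k" and k: "k \<in> {k1,k2,k3}"
  have "feasible V ME ends c (\<lambda>_. k)" using fe k by auto
  hence "PMs V ME ends c (\<lambda>_. k) \<noteq> {}" using feasible_iff[OF mg] by simp
  moreover have "PMs V ME ends c (\<lambda>_. k) = PMs V ME ends c vc" by (rule PMs_local) (use a in simp)
  ultimately have "feasible V ME ends c vc" using feasible_iff[OF mg] by simp
  moreover have "monochromatic V vc" using a by (simp add: monochromatic_def)
  ultimately have "vc_weight V ME ends c w vc = 1" using ghz by (simp add: GHZ_def)
  thus ?thesis using WU_V[OF mg] by simp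
qed

lemma ghz0: "x \<in> V \<Longrightarrow> y \<in> V \<Longrightarrow> vc x \<noteq> vc y \<Longrightarrow> WU V ME ends c w vc = 0"
proof -
  assume "x \<in> V" "y \<in> V" "vc x \<noteq> vc y"
  hence "\<not> monochromatic V vc" by (auto simp: monochromatic_def)
  hence "vc_weight V ME ends c w vc = 0" using ghz by (simp add: GHZ_def)
  thus ?thesis using WU_V[OF mg] by simp
qed

lemma key:
  assumes v: "v \<in> V" and abd: "a \<in> V" "b \<in> V" "d \<in> V" "r \<in> V"
    and dist: "v \<noteq> a" "v \<noteq> b" "v \<noteq> d" "a \<noteq> b" "a \<noteq> d" "b \<noteq> d" "r \<noteq> v" "r \<noteq> a" "r \<noteq> b" "r \<noteq> d"
    and nb: "{x. {v,x} \<in> E} \<subseteq> {a,b,d}"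
    and t: "\<forall>x\<in>{k1,k2,k3}. t x \<noteq> 0" and sv: "\<forall>y\<in>{k1,k2,k3}. sv y \<noteq> 0"
  shows "(\<Sum>x\<in>{k1,k2,k3}. \<Sum>y\<in>{k1,k2,k3}. t x * sv y * Mx ME ends c w v a x y) \<noteq> 0"
proof
  assume z: "(\<Sum>x\<in>{k1,k2,k3}. \<Sum>y\<in>{k1,k2,k3}. t x * sv y * Mx ME ends c w v a x y) = 0"
  define KK where "KK = {k1,k2,k3}"
  define M where "M = Mx ME ends c w"
  define W where "W U vc = WU U ME ends c w vc" for U vc
  define vcf where "vcf k i j l m = (\<lambda>y. if y = v then k else if y = a then i else if y = b then j else if y = d then l else m)" for k i j l m :: nat
  define HA where "HA j l m = W (V - {v,a}) (vcf k1 k1 j l m)" for j l m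
  define HB where "HB i l m = W (V - {v,b}) (vcf k1 i k1 l m)" for i l m
  define HC where "HC i j m = W (V - {v,d}) (vcf k1 i j k1 m)" for i j m
  have vcf_v: "vcf k i j l m v = k" "vcf k i j l m a = i" "vcf k i j l m b = j" "vcf k i j l m d = l" "vcf k i j l m r = m" for k i j l m
    using dist by (auto simp: vcf_def)
  have Wval: "W V (vcf k i j l m) = (if k = i \<and> i = j \<and> j = l \<and> l = m then 1 else 0)"
    if "k\<in>KK" "i\<in>KK" "j\<in>KK" "l\<in>KK" "m\<in>KK" for k i j l m
  proof (cases "k = i \<and> i = j \<and> j = l \<and> l = m")
    case True
    hence "\<forall>x\<in>V. vcf k i j l m x = k" by (auto simp: vcf_def)
    thus ?thesis using ghz1 that True by (simp add: W_def KK_def)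
  next
    case False
    have g: "W V (vcf k i j l m) = 0" if "x \<in> V" "y \<in> V" "vcf k i j l m x \<noteq> vcf k i j l m y" for x y
      unfolding W_def using that by (rule ghz0)
    have "k \<noteq> i \<or> i \<noteq> j \<or> j \<noteq> l \<or> l \<noteq> m" using False by blast
    moreover have "W V (vcf k i j l m) = 0" if "k \<noteq> i" using g[OF v abd(1)] that by (simp add: vcf_v)
    moreover have "W V (vcf k i j l m) = 0" if "i \<noteq> j" using g[OF abd(1) abd(2)] that by (simp add: vcf_v)
    moreover have "W V (vcf k i j l m) = 0" if "j \<noteq> l" using g[OF abd(2) abd(3)] that by (simp add: vcf_v)
    moreover have "W V (vcf k i j l m) = 0" if "l \<noteq> m" using g[OF abd(3) abd(4)] that by (simp add: vcf_v)
    ultimately show ?thesis using False by auto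
  qed
  have Wexp: "W V (vcf k i j l m) = M v a k i * HA j l m + M v b k j * HB i l m + M v d k l * HC i j m" for k i j l m
  proof -
    let ?f = "\<lambda>x. M v x k (vcf k i j l m x) * W (V-{v,x}) (vcf k i j l m)"
    have "W V (vcf k i j l m) = (\<Sum>x\<in>V-{v}. ?f x)"
      using expandV[OF v, of "vcf k i j l m"] by (simp add: W_def M_def vcf_v)
    also have "\<dots> = (\<Sum>x\<in>{a,b,d}. ?f x)"
    proof (rule sum.mono_neutral_right)
      show "finite (V - {v})" using finV by simp
      show "{a,b,d} \<subseteq> V - {v}" using abd dist by auto
      show "\<forall>x\<in>V - {v} - {a,b,d}. ?f x = 0"
      proof
        fix x assume x: "x \<in> V - {v} - {a,b,d}"
        have "M v x k (vcf k i j l m x) = 0"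
        proof (rule ccontr)
          assume "M v x k (vcf k i j l m x) \<noteq> 0"
          hence "{v,x} \<in> E" using M_nb by (simp add: M_def)
          thus False using nb x by auto
        qed
        thus "?f x = 0" by simp
      qed
    qed
    also have "\<dots> = ?f a + ?f b + ?f d" using dist by (simp add: add.assoc)
    also have "W (V-{v,a}) (vcf k i j l m) = HA j l m"
      unfolding HA_def W_def by (rule WU_local) (auto simp: vcf_def)
    also have "W (V-{v,b}) (vcf k i j l m) = HB i l m"
      unfolding HB_def W_def by (rule WU_local) (auto simp: vcf_def)
    also have "W (V-{v,d}) (vcf k i j l m) = HC i j m"
      unfolding HC_def W_def by (rule WU_local) (auto simp: vcf_def)
    finally show ?thesis by (simp add: vcf_v)
  qed
  define \<beta> where "\<beta> j = (\<Sum>k\<in>KK. t k * M v b k j)" for j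
  define \<gamma> where "\<gamma> l = (\<Sum>k\<in>KK. t k * M v d k l)" for l
  define F where "F l m = (\<Sum>i\<in>KK. sv i * HB i l m)" for l m
  define G where "G j m = (\<Sum>i\<in>KK. sv i * HC i j m)" for j m
  have Eq: "\<beta> j * F l m + \<gamma> l * G j m = (if j = l \<and> l = m then t j * sv j else 0)"
    if jlm: "j\<in>KK" "l\<in>KK" "m\<in>KK" for j l m
  proof -
    have "(\<Sum>k\<in>KK. \<Sum>i\<in>KK. t k * sv i * W V (vcf k i j l m)) = (\<Sum>k\<in>KK. \<Sum>i\<in>KK. t k * sv i * (if k = i \<and> i = j \<and> (j = l \<and> l = m) then 1 else 0))"
      using Wval jlm by (intro sum.cong refl) auto
    also have "\<dots> = (if j = l \<and> l = m then t j * sv j else 0)"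
      by (rule dsum) (use jlm in \<open>auto simp: KK_def\<close>)
    finally have A: "(\<Sum>k\<in>KK. \<Sum>i\<in>KK. t k * sv i * W V (vcf k i j l m)) = (if j = l \<and> l = m then t j * sv j else 0)" .
    have "(\<Sum>k\<in>KK. \<Sum>i\<in>KK. t k * sv i * W V (vcf k i j l m)) =
       (\<Sum>k\<in>KK. \<Sum>i\<in>KK. t k * sv i * (M v a k i * HA j l m + M v b k j * HB i l m + M v d k l * HC i j m))"
      by (simp only: Wexp)
    also have "\<dots> = (\<Sum>k\<in>KK. \<Sum>i\<in>KK. t k * sv i * M v a k i) * HA j l m + \<beta> j * F l m + \<gamma> l * G j m"
      unfolding \<beta>_def \<gamma>_def F_def G_def by (rule sum_split3)
    also have "(\<Sum>k\<in>KK. \<Sum>i\<in>KK. t k * sv i * M v a k i) = 0" using z by (simp add: KK_def M_def)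
    finally show ?thesis using A by simp
  qed
  show False
    by (rule alg3[of k1 k2 k3 \<beta> F \<gamma> G "\<lambda>j. t j * sv j"]) (use K Eq t sv in \<open>auto simp: KK_def\<close>)
qed

lemma SE:
  assumes v: "v \<in> V" and x: "x \<in> V" and pq: "p \<in> {k1,k2,k3}" "q \<in> {k1,k2,k3}" "p' \<in> {k1,k2,k3}" "q' \<in> {k1,k2,k3}"
    and nz: "Mx ME ends c w v x p q \<noteq> 0" "Mx ME ends c w v x p' q' \<noteq> 0"
  shows "p = p' \<and> q = q'"
proof (rule ccontr)
  assume ne: "\<not> (p = p' \<and> q = q')"
  have vx: "{v,x} \<in> E" using M_nb nz by blast
  hence xv: "x \<noteq> v" using NB_V by blast
  define Y where "Y = {y. {v,y} \<in> E} - {x}"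
  define X where "X = V - {v,x}"
  have finX: "finite X" using finV by (simp add: X_def)
  have YX: "Y \<subseteq> X" using NB_V by (auto simp: Y_def X_def)
  have "card Y = card {y. {v,y} \<in> E} - 1" unfolding Y_def using vx NB_fin by (simp add: card_Diff_singleton)
  hence cY: "card Y \<le> 2" using NB_card[OF v] by simp
  have "card X = card V - 2" unfolding X_def using v x xv finV by (simp add: card_Diff_subset)
  hence cX: "3 \<le> card X" using cV by simp
  obtain b d r where bdr: "b \<in> X" "d \<in> X" "r \<in> X" "b \<noteq> d" "r \<noteq> b" "r \<noteq> d" "Y \<subseteq> {b,d}"
    using ext2[OF finX YX cY cX] by blast
  have nb: "{y. {v,y} \<in> E} \<subseteq> {x,b,d}" using bdr(7) by (auto simp: Y_def)
  obtain t sv where ts: "\<forall>x\<in>{k1,k2,k3}. t x \<noteq> 0" "\<forall>y\<in>{k1,k2,k3}. sv y \<noteq> 0"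
      "(\<Sum>p1\<in>{k1,k2,k3}. \<Sum>q1\<in>{k1,k2,k3}. t p1 * sv q1 * Mx ME ends c w v x p1 q1) = 0"
    using torus[OF K pq _ nz] ne by blast
  have "(\<Sum>p1\<in>{k1,k2,k3}. \<Sum>q1\<in>{k1,k2,k3}. t p1 * sv q1 * Mx ME ends c w v x p1 q1) \<noteq> 0"
  proof (rule key[OF v x _ _ _ _ _ _ _ _ _ _ _ _ _ nb ts(1,2)])
    have bX: "b \<in> V" "b \<noteq> v" "b \<noteq> x" "d \<in> V" "d \<noteq> v" "d \<noteq> x" "r \<in> V" "r \<noteq> v" "r \<noteq> x"
      using bdr(1-3) by (auto simp: X_def)
    show "b \<in> V" "d \<in> V" "r \<in> V" using bX by simp_all
    show "v \<noteq> x" using xv by simp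
    show "v \<noteq> b" "v \<noteq> d" "x \<noteq> b" "x \<noteq> d" using bX by auto
    show "b \<noteq> d" "r \<noteq> b" "r \<noteq> d" using bdr by simp_all
    show "r \<noteq> v" "r \<noteq> x" using bX by simp_all
  qed
  thus False using ts(3) by simp
qed

lemma colnb: "v \<in> V \<Longrightarrow> k \<in> {k1,k2,k3} \<Longrightarrow> \<exists>x\<in>V-{v}. Mx ME ends c w v x k k \<noteq> 0"
proof (rule ccontr)
  assume v: "v \<in> V" and k: "k \<in> {k1,k2,k3}" and n: "\<not> (\<exists>x\<in>V-{v}. Mx ME ends c w v x k k \<noteq> 0)"
  have "WU V ME ends c w (\<lambda>_. k) = 1" using ghz1[of "\<lambda>_. k" k] k by simp
  moreover have "WU V ME ends c w (\<lambda>_. k) = (\<Sum>x\<in>V-{v}. Mx ME ends c w v x k k * WU (V-{v,x}) ME ends c w (\<lambda>_. k))"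
    using expandV[OF v, of "\<lambda>_. k"] by simp
  moreover have "(\<Sum>x\<in>V-{v}. Mx ME ends c w v x k k * WU (V-{v,x}) ME ends c w (\<lambda>_. k)) = 0"
  proof (rule sum.neutral, rule ballI)
    fix x assume "x \<in> V - {v}"
    hence "Mx ME ends c w v x k k = 0" using n by blast
    thus "Mx ME ends c w v x k k * WU (V-{v,x}) ME ends c w (\<lambda>_. k) = 0" by simp
  qed
  ultimately show False by simp
qed

lemma nonzero_W:
  fixes f :: "nat \<Rightarrow> 'v \<Rightarrow> 'v" and vc :: "'v \<Rightarrow> nat"
  assumes fp: "\<And>k v. k \<in> {k1,k2,k3} \<Longrightarrow> v \<in> V \<Longrightarrow> f k v \<in> V \<and> f k v \<noteq> v \<and> f k (f k v) = v \<and> Mx ME ends c w v (f k v) k k \<noteq> 0"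
    and diag: "\<And>v x p q. v \<in> V \<Longrightarrow> x \<in> V \<Longrightarrow> p \<in> {k1,k2,k3} \<Longrightarrow> q \<in> {k1,k2,k3} \<Longrightarrow> Mx ME ends c w v x p q \<noteq> 0 \<Longrightarrow> p = q \<and> x = f p v"
    and vcK: "\<And>x. x \<in> V \<Longrightarrow> vc x \<in> {k1,k2,k3}" and cons: "\<And>x. x \<in> V \<Longrightarrow> vc (f (vc x) x) = vc x"
  shows "U \<subseteq> V \<Longrightarrow> (\<forall>y\<in>U. f (vc y) y \<in> U) \<Longrightarrow> WU U ME ends c w vc \<noteq> 0"
proof (induction "card U" arbitrary: U rule: less_induct)
  case less
  show ?case
  proof (cases "U = {}")
    case True thus ?thesis by (simp add: WU_empty)
  next
    case False
    define u where "u = (SOME x. x \<in> U)"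
    have u: "u \<in> U" unfolding u_def using False by (simp add: some_in_eq)
    define p where "p = f (vc u) u"
    have uV: "u \<in> V" using less.prems(1) u by (rule subsetD)
    have pU: "p \<in> U" using less.prems(2) u unfolding p_def by (rule bspec)
    have fpu: "p \<in> V" "p \<noteq> u" "f (vc u) p = u" "Mx ME ends c w u p (vc u) (vc u) \<noteq> 0"
      using fp[OF vcK[OF uV] uV] by (simp_all add: p_def)
    have vcp: "vc p = vc u" using cons[OF uV] by (simp add: p_def)
    have finU: "finite U" using finite_subset[OF less.prems(1) finV] .
    have "WU U ME ends c w vc = (\<Sum>x\<in>U-{u}. Mx ME ends c w u x (vc u) (vc x) * WU (U - {u,x}) ME ends c w vc)"
      by (rule expand2[OF finME nl u finU])
    also have "\<dots> = Mx ME ends c w u p (vc u) (vc p) * WU (U - {u,p}) ME ends c w vc + (\<Sum>x\<in>U-{u}-{p}. Mx ME ends c w u x (vc u) (vc x) * WU (U - {u,x}) ME ends c w vc)"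
    proof -
      have "p \<in> U - {u}" using pU fpu(2) by simp
      thus ?thesis using sum.remove[of "U-{u}" p] finU by simp
    qed
    also have "(\<Sum>x\<in>U-{u}-{p}. Mx ME ends c w u x (vc u) (vc x) * WU (U - {u,x}) ME ends c w vc) = 0"
    proof (rule sum.neutral, rule ballI)
      fix x assume x: "x \<in> U - {u} - {p}"
      have "x \<in> U" using x by simp
      hence xV: "x \<in> V" using less.prems(1) by (rule rev_subsetD)
      have "Mx ME ends c w u x (vc u) (vc x) = 0"
      proof (rule ccontr)
        assume "Mx ME ends c w u x (vc u) (vc x) \<noteq> 0"
        hence "vc u = vc x \<and> x = f (vc u) u" by (rule diag[OF uV xV vcK[OF uV] vcK[OF xV]])
        hence "x = f (vc u) u" by (rule conjunct2)
        thus False using x by (simp add: p_def)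
      qed
      thus "Mx ME ends c w u x (vc u) (vc x) * WU (U - {u,x}) ME ends c w vc = 0" by simp
    qed
    finally have eq: "WU U ME ends c w vc = Mx ME ends c w u p (vc u) (vc u) * WU (U - {u,p}) ME ends c w vc"
      using vcp by simp
    have sub: "U - {u,p} \<subseteq> V" using Diff_subset less.prems(1) by (rule order_trans)
    have cl: "\<forall>y\<in>U - {u,p}. f (vc y) y \<in> U - {u,p}"
    proof
      fix y assume y: "y \<in> U - {u,p}"
      have yU: "y \<in> U" using y by simp
      hence yV: "y \<in> V" using less.prems(1) by (rule rev_subsetD)
      from less.prems(2) yU have fyU: "f (vc y) y \<in> U" by (rule bspec)
      have fy: "f (vc y) (f (vc y) y) = y" using fp[OF vcK[OF yV] yV] by simp
      have cy: "vc (f (vc y) y) = vc y" using cons[OF yV] .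
      have "f (vc y) y \<noteq> u"
      proof
        assume h: "f (vc y) y = u"
        hence "vc u = vc y" using cy by simp
        hence "p = f (vc y) u" by (simp add: p_def)
        also have "\<dots> = y" using fy h by simp
        finally show False using y by simp
      qed
      moreover have "f (vc y) y \<noteq> p"
      proof
        assume h: "f (vc y) y = p"
        hence "vc y = vc u" using cy vcp by simp
        hence "y = f (vc u) p" using fy h by simp
        also have "\<dots> = u" using fpu(3) .
        finally show False using y by simp
      qed
      ultimately show "f (vc y) y \<in> U - {u,p}" using fyU by simp
    qed
    have "U - {u,p} \<subset> U" using u by blast
    hence "card (U - {u,p}) < card U" using finU by (rule psubset_card_mono[rotated])
    hence "WU (U - {u,p}) ME ends c w vc \<noteq> 0" by (rule less.hyps[OF _ sub cl])
    thus ?thesis using eq fpu(4) by simp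
  qed
qed

lemma no3: False
proof -
  define fc where "fc k v = (SOME x. x \<in> V - {v} \<and> Mx ME ends c w v x k k \<noteq> 0)" for k v
  have fc1: "fc k v \<in> V \<and> fc k v \<noteq> v \<and> Mx ME ends c w v (fc k v) k k \<noteq> 0" if "k \<in> {k1,k2,k3}" "v \<in> V" for k v
  proof -
    have "\<exists>x. x \<in> V - {v} \<and> Mx ME ends c w v x k k \<noteq> 0" using colnb[OF that(2,1)] by blast
    hence "fc k v \<in> V - {v} \<and> Mx ME ends c w v (fc k v) k k \<noteq> 0" unfolding fc_def by (rule someI_ex)
    thus ?thesis by simp
  qed
  have diag: "p = q \<and> x = fc p v"
    if vx: "v \<in> V" "x \<in> V" and pq: "p \<in> {k1,k2,k3}" "q \<in> {k1,k2,k3}" and nz: "Mx ME ends c w v x p q \<noteq> 0" for v x p q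
  proof -
    have K1: "k1 \<in> {k1,k2,k3}" "k2 \<in> {k1,k2,k3}" "k3 \<in> {k1,k2,k3}" by simp_all
    have dd: "fc ka v \<noteq> fc kb v" if "ka \<in> {k1,k2,k3}" "kb \<in> {k1,k2,k3}" "ka \<noteq> kb" for ka kb
    proof
      assume eq: "fc ka v = fc kb v"
      have "Mx ME ends c w v (fc ka v) ka ka \<noteq> 0" "Mx ME ends c w v (fc ka v) kb kb \<noteq> 0"
        using fc1[OF that(1) vx(1)] fc1[OF that(2) vx(1)] eq by simp_all
      hence "ka = kb" using SE[OF vx(1) _ that(1) that(1) that(2) that(2)] fc1[OF that(1) vx(1)] by blast
      thus False using that(3) by simp
    qed
    have sub: "{fc k1 v, fc k2 v, fc k3 v} \<subseteq> {y. {v,y} \<in> E}"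
      using fc1[OF K1(1) vx(1)] fc1[OF K1(2) vx(1)] fc1[OF K1(3) vx(1)] M_nb by blast
    have c3: "card {fc k1 v, fc k2 v, fc k3 v} = 3"
      using dd[OF K1(1) K1(2)] dd[OF K1(1) K1(3)] dd[OF K1(2) K1(3)] K by simp
    have "card {y. {v,y} \<in> E} \<le> 3" by (rule NB_card[OF vx(1)])
    moreover have "card {fc k1 v, fc k2 v, fc k3 v} \<le> card {y. {v,y} \<in> E}" by (rule card_mono[OF NB_fin sub])
    ultimately have "card {fc k1 v, fc k2 v, fc k3 v} = card {y. {v,y} \<in> E}" using c3 by simp
    hence eqN: "{fc k1 v, fc k2 v, fc k3 v} = {y. {v,y} \<in> E}" by (rule card_subset_eq[OF NB_fin sub])
    have "{v,x} \<in> E" using M_nb nz by blast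
    hence "x \<in> {y. {v,y} \<in> E}" by simp
    hence "x \<in> {fc k1 v, fc k2 v, fc k3 v}" by (simp only: eqN)
    then obtain ka where ka: "ka \<in> {k1,k2,k3}" "x = fc ka v" by auto
    have "Mx ME ends c w v x ka ka \<noteq> 0" using fc1[OF ka(1) vx(1)] ka(2) by simp
    hence "p = ka \<and> q = ka" by (rule SE[OF vx(1) vx(2) pq ka(1) ka(1) nz])
    thus ?thesis using ka by simp
  qed
  have inv: "fc k (fc k v) = v" if "k \<in> {k1,k2,k3}" "v \<in> V" for k v
  proof -
    have y: "fc k v \<in> V" "Mx ME ends c w v (fc k v) k k \<noteq> 0" using fc1[OF that] by auto
    hence "Mx ME ends c w (fc k v) v k k \<noteq> 0" using Mx_sym by metis
    hence "k = k \<and> v = fc k (fc k v)" by (rule diag[OF y(1) that(2) that(1) that(1)])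
    thus ?thesis by (metis conjunct2)
  qed
  have fp: "fc k v \<in> V \<and> fc k v \<noteq> v \<and> fc k (fc k v) = v \<and> Mx ME ends c w v (fc k v) k k \<noteq> 0"
    if "k \<in> {k1,k2,k3}" "v \<in> V" for k v
    using fc1[OF that] inv[OF that] by simp
  have invs: "invol V (fc k)" if "k \<in> {k1,k2,k3}" for k
    unfolding invol_def using fp that by blast
  have c5: "5 \<le> card V" using cV by simp
  have i1: "invol V (fc k1)" "invol V (fc k2)" "invol V (fc k3)" by (rule invs, simp)+
  obtain A B C where g: "good V (fc k1) (fc k2) (fc k3) A B C"
    using comb[OF finV c5 i1(1) i1(2) i1(3)] by blast
  have gA1: "A \<union> B \<union> C = V" using g unfolding good_def by (elim conjE) assumption
  have gA2: "A \<inter> B = {}" using g unfolding good_def by (elim conjE) assumption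
  have gA3: "A \<inter> C = {}" using g unfolding good_def by (elim conjE) assumption
  have gA4: "B \<inter> C = {}" using g unfolding good_def by (elim conjE) assumption
  have gA5: "\<forall>x\<in>A. fc k1 x \<in> A" using g unfolding good_def by (elim conjE) assumption
  have gA6: "\<forall>x\<in>B. fc k2 x \<in> B" using g unfolding good_def by (elim conjE) assumption
  have gA7: "\<forall>x\<in>C. fc k3 x \<in> C" using g unfolding good_def by (elim conjE) assumption
  have gA8: "A \<noteq> V" using g unfolding good_def by (elim conjE) assumption
  have gA9: "B \<noteq> V" using g unfolding good_def by (elim conjE) assumption
  have gA10: "C \<noteq> V" using g unfolding good_def by (elim conjE) assumption
  note gA = gA1 gA2 gA3 gA4 gA5 gA6 gA7 gA8 gA9 gA10
  define vc where "vc x = (if x \<in> A then k1 else if x \<in> B then k2 else k3)" for x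
  have vcK: "vc x \<in> {k1,k2,k3}" for x by (simp add: vc_def)
  have cons: "vc (fc (vc x) x) = vc x" if x: "x \<in> V" for x
  proof (cases "x \<in> A")
    case True
    hence "fc k1 x \<in> A" using gA(5) by blast
    thus ?thesis using True by (simp add: vc_def)
  next
    case nA: False
    show ?thesis
    proof (cases "x \<in> B")
      case True
      hence "fc k2 x \<in> B" using gA(6) by blast
      moreover hence "fc k2 x \<notin> A" using gA(2) by blast
      ultimately show ?thesis using True nA by (simp add: vc_def)
    next
      case False
      hence "x \<in> C" using nA x gA(1) by blast
      hence "fc k3 x \<in> C" using gA(7) by blast
      moreover hence "fc k3 x \<notin> A" "fc k3 x \<notin> B" using gA(3,4) by blast+
      ultimately show ?thesis using False nA K by (simp add: vc_def)
    qed
  qed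
  have nz: "WU V ME ends c w vc \<noteq> 0"
  proof (rule nonzero_W[OF fp diag])
    show "vc x \<in> {k1,k2,k3}" for x by (rule vcK)
    show "vc (fc (vc x) x) = vc x" if "x \<in> V" for x using cons[OF that] .
    show "V \<subseteq> V" by simp
    show "\<forall>y\<in>V. fc (vc y) y \<in> V" using fp vcK by blast
  qed
  have Vne: "V \<noteq> {}" using cV by auto
  have nm: "\<exists>x\<in>V. \<exists>y\<in>V. vc x \<noteq> vc y"
  proof -
    define z where "z = (SOME x. x \<in> V)"
    have z: "z \<in> V" unfolding z_def using Vne by (simp add: some_in_eq)
    show ?thesis
    proof (cases "z \<in> A")
      case True
      have "A \<subseteq> V" using gA(1) by blast
      then obtain y where y: "y \<in> V" "y \<notin> A" using gA(8) by blast
      hence "vc y \<noteq> k1" using K by (simp add: vc_def)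
      moreover have "vc z = k1" using True by (simp add: vc_def)
      ultimately show ?thesis using y z by metis
    next
      case nA: False
      show ?thesis
      proof (cases "z \<in> B")
        case True
        have "B \<subseteq> V" using gA(1) by blast
        then obtain y where y: "y \<in> V" "y \<notin> B" using gA(9) by blast
        hence "vc y \<noteq> k2" using K by (simp add: vc_def)
        moreover have "vc z = k2" using True nA by (simp add: vc_def)
        ultimately show ?thesis using y z by metis
      next
        case False
        have zC: "z \<in> C" using z nA False gA(1) by blast
        have "C \<subseteq> V" using gA(1) by blast
        then obtain y where y: "y \<in> V" "y \<notin> C" using gA(10) by blast
        hence "y \<in> A \<or> y \<in> B" using gA(1) by blast
        hence "vc y \<noteq> k3" using K by (auto simp: vc_def)
        moreover have "vc z = k3" using False nA by (simp add: vc_def)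
        ultimately show ?thesis using y z by metis
      qed
    qed
  qed
  then obtain x y where "x \<in> V" "y \<in> V" "vc x \<noteq> vc y" by blast
  hence "WU V ME ends c w vc = 0" by (rule ghz0)
  thus False using nz by simp
qed

end

lemma dim_le2:
  assumes a: "simple_graph V E" "max_degree V E = 3" "4 < card V" "multigraph V ME ends" "skeleton ME ends = E" "GHZ V ME ends c w"
  shows "dimension V ME ends c \<le> 2"
proof -
  define Fs where "Fs = {k. feasible V ME ends c (\<lambda>_. k)}"
  have fc: "finite Fs \<and> card Fs \<le> 2"
  proof (rule ccontr)
    assume na: "\<not> (finite Fs \<and> card Fs \<le> 2)"
    have "\<exists>T. T \<subseteq> Fs \<and> card T = 3"
    proof (cases "finite Fs")
      case True
      hence "3 \<le> card Fs" using na by simp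
      then obtain T where "T \<subseteq> Fs" "card T = 3" by (rule obtain_subset_with_card_n)
      thus ?thesis by blast
    next
      case False
      from infinite_arbitrarily_large[OF False, of 3] show ?thesis by blast
    qed
    then obtain T where T: "T \<subseteq> Fs" "card T = 3" by blast
    then obtain k1 k2 k3 where k: "T = {k1,k2,k3}" "k1 \<noteq> k2" "k2 \<noteq> k3" "k1 \<noteq> k3"
      unfolding card_3_iff by blast
    have "k1 \<in> Fs" "k2 \<in> Fs" "k3 \<in> Fs" using T(1) k(1) by auto
    hence f: "feasible V ME ends c (\<lambda>_. k1)" "feasible V ME ends c (\<lambda>_. k2)" "feasible V ME ends c (\<lambda>_. k3)"
      by (simp_all add: Fs_def)
    show False using no3[OF a k(2) k(4) k(3) f] .
  qed
  have "dimension V ME ends c = enat (card Fs)" using fc by (simp add: dimension_def Fs_def)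
  thus ?thesis using fc by (simp add: numeral_eq_enat)
qed

theorem theorem5:
  fixes V :: "'v set" and E :: "'v set set"
  assumes "simple_graph V E"
    and "max_degree V E = 3"
    and "card V > 4"
  shows "matching_index V E \<le> 2"
  unfolding matching_index_def
proof (rule SUP_least)
  fix x assume "x \<in> {(ME, ends, c, w). multigraph V ME ends \<and> skeleton ME ends = E \<and> GHZ V ME ends c w}"
  then obtain ME ends c w where x: "x = (ME, ends, c, w)" "multigraph V ME ends" "skeleton ME ends = E" "GHZ V ME ends c w"
    by auto
  show "(case x of (ME, ends, c, w) \<Rightarrow> dimension V ME ends c) \<le> 2"
    using dim_le2[OF assms(1,2) _ x(2-4)] assms(3) x(1) by simp
qed

end
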